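(* Fix $a\in(0,\tfrac12)$. Suppose that for some $E\in(0,1]$ and some $\lambda\le\lambda_0:=-1+a$ the $\Theta$-flow described in the context has a saddles connector from $(0,0)$ to $(\pi,-\pi)$. Then for every $E'\in[0,E)$ the $\Theta$-flow with parameters $(E',\lambda)$ has a corridor $\mathcal K_1(E',\lambda)$ of winding number $0$.
   Context: For $a\in(0,\tfrac12)$, $E\in[0,1]$, $\lambda\in\mathbb R$, the $\Theta$-flow is the system on the strip $[0,\pi]\times\mathbb R$ (with $\Theta$ understood mod $2\pi$ on the cylinder) $$\dot\theta=\sin\theta,\qquad \dot\Theta=-2a\sin\theta\cos\theta\cos\Theta+2aE\sin^2\theta\sin\Theta-\sin\Theta+2\lambda\sin\theta.$$ Its equilibria are $(0,0)$, $(0,\pi)$ (left) and $(\pi,-\pi)$, $(\pi,0)$ (right), mod $2\pi$ in $\Theta$. Let $\widetilde{\mathcal W}^-$ be the unique orbit in $(0,\pi)\times\mathbb R$ with $\alpha$-limit $(0,0)$ and $\widetilde{\mathcal W}^+$ the unique orbit with $\omega$-limit $(\pi,-\pi)$. A saddles connector from $(0,0)$ to $(\pi,-\pi)$ is an orbit in the strip with $\alpha$-limit $(0,0)$ and $\omega$-limit $(\pi,-\pi)$ (i.e. $\widetilde{\mathcal W}^-=\widetilde{\mathcal W}^+$). The flow has a corridor $\mathcal K_1(E,\lambda)$ of winding number $k\in\mathbb Z$ if $\widetilde{\mathcal W}^-\neq\widetilde{\mathcal W}^+$ and the $\omega$-limit of $\widetilde{\mathcal W}^-$ is $(\pi,-2\pi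 k)$. *)

theory Defs
  imports "HOL-Analysis.Analysis"
begin

text \<open>Vector field of the Theta-flow, in lifted coordinates (theta, Theta) on [0,pi] x R.\<close>
definition theta_field :: "real \<Rightarrow> real \<Rightarrow> real \<Rightarrow> real \<times> real \<Rightarrow> real \<times> real" where
  "theta_field a E lam p = (let \<theta> = fst p; \<Theta> = snd p in
     (sin \<theta>,
      - 2 * a * sin \<theta> * cos \<theta> * cos \<Theta> + 2 * a * E * (sin \<theta>)\<^sup>2 * sin \<Theta>
      - sin \<Theta> + 2 * lam * sin \<theta>))"

definition strip_orbit :: "real \<Rightarrow> real \<Rightarrow> real \<Rightarrow> (real \<Rightarrow> real \<times> real) \<Rightarrow> bool" where
  "strip_orbit a E lam \<gamma> \<longleftrightarrow>
     (\<forall>t. (\<gamma> has_vector_derivative theta_field a E lam (\<gamma> t)) (at t)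
          \<and> 0 < fst (\<gamma> t) \<and> fst (\<gamma> t) < pi)"

definition alpha_lim :: "(real \<Rightarrow> real \<times> real) \<Rightarrow> real \<times> real \<Rightarrow> bool" where
  "alpha_lim \<gamma> p \<longleftrightarrow> (\<gamma> \<longlongrightarrow> p) at_bot"

definition omega_lim :: "(real \<Rightarrow> real \<times> real) \<Rightarrow> real \<times> real \<Rightarrow> bool" where
  "omega_lim \<gamma> p \<longleftrightarrow> (\<gamma> \<longlongrightarrow> p) at_top"

definition saddles_connector :: "real \<Rightarrow> real \<Rightarrow> real \<Rightarrow> bool" where
  "saddles_connector a E lam \<longleftrightarrow>
     (\<exists>\<gamma>. strip_orbit a E lam \<gamma> \<and> alpha_lim \<gamma> (0, 0) \<and> omega_lim \<gamma> (pi, - pi))"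

definition corridor_K1 :: "real \<Rightarrow> real \<Rightarrow> real \<Rightarrow> int \<Rightarrow> bool" where
  "corridor_K1 a E lam k \<longleftrightarrow>
     (\<exists>\<gamma>. strip_orbit a E lam \<gamma> \<and> alpha_lim \<gamma> (0, 0)) \<and>
     (\<forall>\<gamma>. strip_orbit a E lam \<gamma> \<and> alpha_lim \<gamma> (0, 0) \<longrightarrow>
        \<not> omega_lim \<gamma> (pi, - pi) \<and> omega_lim \<gamma> (pi, - 2 * pi * of_int k))"

end

theory Submission
  imports Defs
begin



definition sg :: "real \<Rightarrow> real" where "sg u = 2 * u/(1+u^2)"
definition cg :: "real \<Rightarrow> real" where "cg u = (1-u^2)/(1+u^2)"

definition Gf :: "real \<Rightarrow> real \<Rightarrow> real \<Rightarrow> real \<Rightarrow> real \<Rightarrow> real" where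
 "Gf a E lam u x = - 2 * a * sg u * cg u * cos x + 2 * a * E * (sg u)^2 * sin x - sin x + 2 * lam * sg u"

lemma sin_2arctan: "sin (2 * arctan u) = sg u"
proof -
 have "sin (2 * arctan u) = 2 * sin(arctan u) * cos(arctan u)" by (simp add: sin_double)
 also have "\<dots> = 2 * u/(sqrt(1+u^2))^2" by (simp add: sin_arctan cos_arctan power2_eq_square)
 also have "\<dots> = sg u" by (simp add: sg_def add_pos_nonneg)
 finally show ?thesis .
qed

lemma cos_2arctan: "cos (2 * arctan u) = cg u"
proof -
 have "cos (2 * arctan u) = (cos(arctan u))^2 - (sin(arctan u))^2" by (simp add: cos_double)
 also have "\<dots> = 1/(sqrt(1+u^2))^2 - u^2/(sqrt(1+u^2))^2"
  by (simp add: sin_arctan cos_arctan power_divide)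
 also have "\<dots> = cg u" by (simp add: cg_def add_pos_nonneg diff_divide_distrib)
 finally show ?thesis .
qed

lemma sg_abs: "\<bar>sg u\<bar> \<le> 1"
proof -
  have p: "1+u^2 > 0" by (simp add: add_pos_nonneg)
  have "0 \<le> (\<bar>u\<bar> - 1)^2" by simp
  hence "2 * \<bar>u\<bar> \<le> 1+u^2" unfolding power2_diff power2_abs by simp
  hence "\<bar>2 * u\<bar> \<le> \<bar>1+u^2\<bar>" by (simp add: abs_mult)
  thus ?thesis using p by (simp add: sg_def abs_divide divide_le_eq)
qed

lemma sg_pos: "u > 0 \<Longrightarrow> sg u > 0" by (simp add: sg_def add_pos_nonneg)

lemma sg_le: "u \<ge> 0 \<Longrightarrow> sg u \<le> 2 * u"
proof -
 assume u: "u \<ge> 0"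
 have "1+u^2 \<ge> 1" by simp
 hence "2 * u/(1+u^2) \<le> 2 * u/1" using u by (intro divide_left_mono) (auto intro: add_pos_nonneg)
 thus ?thesis by (simp add: sg_def)
qed

lemma cg_abs: "\<bar>cg u\<bar> \<le> 1"
proof -
  have p: "1+u^2 > 0" by (simp add: add_pos_nonneg)
  have "u^2 \<ge> 0" by simp
  hence "\<bar>1-u^2\<bar> \<le> \<bar>1+u^2\<bar>" by linarith
  thus ?thesis using p by (simp add: cg_def abs_divide divide_le_eq)
qed

lemma cg_nonneg: "\<bar>u\<bar> \<le> 1 \<Longrightarrow> cg u \<ge> 0"
proof -
  assume "\<bar>u\<bar> \<le> 1"
  hence "\<bar>u\<bar>^2 \<le> 1" by (intro power_le_one) auto
  hence "u^2 \<le> 1" by simp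
  thus ?thesis unfolding cg_def by (intro divide_nonneg_pos) (auto intro: add_pos_nonneg)
qed

lemma sg_tendsto0: "(sg \<longlongrightarrow> 0) (at_top)"
proof -
 have "((\<lambda>u. sin (2 * arctan u)) \<longlongrightarrow> sin (2 * (pi/2))) at_top"
  by (intro tendsto_intros tendsto_arctan_at_top)
 thus ?thesis by (simp add: sin_2arctan)
qed

lemma sg_tendsto0': "(sg \<longlongrightarrow> 0) (at 0)"
proof -
 have "isCont sg 0" unfolding sg_def by (intro continuous_intros) (simp add: add_pos_nonneg)
 thus ?thesis by (simp add: isCont_def sg_def)
qed




lemma barrier:
  fixes f f' :: "real \<Rightarrow> real"
  assumes ab: "a \<le> b" and der: "\<And>x. x \<in> {a..b} \<Longrightarrow> (f has_real_derivative f' x) (at x)"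
    and fa: "f a < 0" and cr: "\<And>x. x \<in> {a..b} \<Longrightarrow> f x = 0 \<Longrightarrow> f' x < 0"
  shows "f b < 0"
proof (rule ccontr)
  assume "\<not> f b < 0"
  hence fb: "f b \<ge> 0" by simp
  have cont: "continuous_on {a..b} f"
    using der by (intro continuous_at_imp_continuous_on ballI DERIV_isCont) auto
  define S where "S = {a..b} \<inter> f -` {0..}"
  have clS: "closed S" unfolding S_def by (rule continuous_closed_preimage[OF cont]) auto
  have bS: "b \<in> S" using ab fb by (auto simp: S_def)
  have bdd: "bdd_below S" unfolding S_def by (rule bdd_belowI[of _ a]) auto
  define z where "z = Inf S"
  have zS: "z \<in> S" unfolding z_def using closed_contains_Inf[OF _ bdd clS] bS by auto
  have zle: "\<And>y. y \<in> S \<Longrightarrow> z \<le> y" unfolding z_def using bdd by (simp add: cInf_lower)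
  have z1: "a \<le> z" "z \<le> b" "f z \<ge> 0" using zS by (auto simp: S_def)
  have "continuous_on {a..z} f" by (rule continuous_on_subset[OF cont]) (use z1 in auto)
  then obtain y where y: "a \<le> y" "y \<le> z" "f y = 0" using IVT'[of f a 0 z] fa z1 by auto
  have "y \<in> S" using y z1 by (auto simp: S_def)
  hence yz: "y = z" using zle y by force
  have az: "a < z" using y yz fa by (cases "a = z") auto
  have "f' z < 0" using cr[of z] y yz z1 by auto
  then obtain d where d: "d > 0" "\<And>h. h > 0 \<Longrightarrow> h < d \<Longrightarrow> f z < f (z - h)"
    using DERIV_neg_dec_left[OF der[of z]] z1 by auto
  define h where "h = min (d/2) ((z-a)/2)"
  have h: "h > 0" "h < d" "z - h \<ge> a" using d az by (auto simp: h_def min_def field_simps)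
  have "f (z - h) > 0" using d(2)[OF h(1,2)] y yz by simp
  hence "z - h \<in> S" using h z1 by (auto simp: S_def)
  thus False using zle h by force
qed

lemma barrier_all:
  fixes f f' :: "real \<Rightarrow> real"
  assumes der: "\<And>x. x \<ge> a \<Longrightarrow> (f has_real_derivative f' x) (at x)"
    and fa: "f a < 0" and cr: "\<And>x. x \<ge> a \<Longrightarrow> f x = 0 \<Longrightarrow> f' x < 0"
    and "b \<ge> a"
  shows "f b < 0"
  using assms by (intro barrier[of a b f f']) auto

lemma grow:
  fixes f f' :: "real \<Rightarrow> real"
  assumes der: "\<And>x. x \<ge> T \<Longrightarrow> (f has_real_derivative f' x) (at x)"
    and c: "\<And>x. x \<ge> T \<Longrightarrow> f' x \<ge> c" and t: "t \<ge> T"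
  shows "f t \<ge> f T + c * (t - T)"
proof (cases "t = T")
  case False
  hence "T < t" using t by simp
  then obtain z where z: "T < z" "z < t" "f t - f T = (t - T) * f' z"
    using MVT2[of T t f f'] der by auto
  have "(t - T) * f' z \<ge> (t - T) * c" using c[of z] z by (intro mult_left_mono) auto
  thus ?thesis using z by (simp add: algebra_simps)
qed simp

lemma grow_contra:
  fixes f f' :: "real \<Rightarrow> real"
  assumes der: "\<And>x. x \<ge> T \<Longrightarrow> (f has_real_derivative f' x) (at x)"
    and c: "\<And>x. x \<ge> T \<Longrightarrow> f' x \<ge> c" and cpos: "c > 0"
    and bd: "\<And>x. x \<ge> T \<Longrightarrow> f x \<le> B"
  shows False
proof -
  define t where "t = T + (\<bar>B - f T\<bar> + 1) / c"
  have tT: "t \<ge> T" using cpos by (simp add: t_def)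
  have "f t \<ge> f T + c * (t - T)" by (rule grow[OF der c tT])
  also have "c * (t - T) = \<bar>B - f T\<bar> + 1" using cpos by (simp add: t_def)
  finally have "f t > B" by linarith
  thus False using bd[OF tT] by simp
qed

definition nsol :: "real \<Rightarrow> real \<Rightarrow> real \<Rightarrow> (real \<Rightarrow> real) \<Rightarrow> bool" where
  "nsol a E lam Th \<longleftrightarrow> (\<forall>t. (Th has_real_derivative Gf a E lam (exp t) (Th t)) (at t))"

lemma field_2arctan:
  "theta_field a E lam (2 * arctan u, p) = (sg u, Gf a E lam u p)"
  by (simp add: theta_field_def Gf_def sin_2arctan cos_2arctan)

lemma orbit_comp:
  assumes "strip_orbit a E lam \<gamma>"
  shows "((\<lambda>t. fst (\<gamma> t)) has_real_derivative sin (fst (\<gamma> t))) (at t)"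
    and "((\<lambda>t. snd (\<gamma> t)) has_real_derivative snd (theta_field a E lam (\<gamma> t))) (at t)"
proof -
  have d: "(\<gamma> has_vector_derivative theta_field a E lam (\<gamma> t)) (at t)"
    using assms by (simp add: strip_orbit_def)
  have "((\<lambda>t. fst (\<gamma> t)) has_vector_derivative fst (theta_field a E lam (\<gamma> t))) (at t)"
    using has_derivative_fst[OF d[unfolded has_vector_derivative_def]]
    by (simp add: has_vector_derivative_def)
  thus "((\<lambda>t. fst (\<gamma> t)) has_real_derivative sin (fst (\<gamma> t))) (at t)"
    by (simp add: has_real_derivative_iff_has_vector_derivative theta_field_def Let_def)
  have "((\<lambda>t. snd (\<gamma> t)) has_vector_derivative snd (theta_field a E lam (\<gamma> t))) (at t)"
    using has_derivative_snd[OF d[unfolded has_vector_derivative_def]]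
    by (simp add: has_vector_derivative_def)
  thus "((\<lambda>t. snd (\<gamma> t)) has_real_derivative snd (theta_field a E lam (\<gamma> t))) (at t)"
    by (simp add: has_real_derivative_iff_has_vector_derivative)
qed

lemma theta_formula:
  assumes "strip_orbit a E lam \<gamma>"
  obtains C where "C > 0" "\<And>t. fst (\<gamma> t) = 2 * arctan (C * exp t)"
proof -
  define th where "th t = fst (\<gamma> t)" for t
  have rng: "0 < th t" "th t < pi" for t using assms by (auto simp: strip_orbit_def th_def)
  have dth: "(th has_real_derivative sin (th t)) (at t)" for t
    unfolding th_def using orbit_comp(1)[OF assms] .
  define Q where "Q t = tan (th t / 2) * exp (- t)" for t
  have cpos: "cos (th t / 2) > 0" for t using rng[of t] by (intro cos_gt_zero_pi) auto
  have "(Q has_real_derivative 0) (at t)" for t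
  proof -
    have h2: "((\<lambda>t. th t / 2) has_real_derivative sin (th t) / 2) (at t)"
      using DERIV_cdivide[OF dth, of 2] .
    have ht: "((\<lambda>t. tan (th t / 2)) has_real_derivative inverse ((cos (th t / 2))\<^sup>2) * (sin (th t) / 2)) (at t)"
      using DERIV_chain2[OF DERIV_tan h2] cpos[of t] by simp
    have he: "((\<lambda>t. exp (- t)) has_real_derivative exp (- t) * (- 1)) (at t)"
      by (intro derivative_eq_intros) auto
    have "(Q has_real_derivative (inverse ((cos (th t / 2))\<^sup>2) * (sin (th t) / 2)) * exp (- t)
            + (exp (- t) * (- 1)) * tan (th t / 2)) (at t)"
      unfolding Q_def by (rule DERIV_mult[OF ht he])
    moreover have "inverse ((cos (th t / 2))\<^sup>2) * (sin (th t) / 2) = tan (th t / 2)"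
    proof -
      have "sin (th t) = sin (2 * (th t / 2))" by simp
      also have "\<dots> = 2 * sin (th t / 2) * cos (th t / 2)" by (rule sin_double)
      finally show ?thesis using cpos[of t] by (simp add: tan_def power2_eq_square field_simps)
    qed
    ultimately show ?thesis by simp
  qed
  hence Qc: "Q t = Q 0" for t by (intro DERIV_isconst_all) auto
  define C where "C = Q 0"
  have tpos: "tan (th 0 / 2) > 0" using rng[of 0] by (intro tan_gt_zero) auto
  have C: "C > 0" using tpos by (simp add: C_def Q_def)
  have "fst (\<gamma> t) = 2 * arctan (C * exp t)" for t
  proof -
    have "tan (th t / 2) = C * exp t" using Qc[of t] by (simp add: Q_def C_def exp_minus field_simps)
    moreover have "arctan (tan (th t / 2)) = th t / 2" using rng[of t] by (intro arctan_tan) auto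
    ultimately show ?thesis by (simp add: th_def)
  qed
  thus ?thesis using that C by blast
qed

lemma orbit_nsol:
  assumes "strip_orbit a E lam \<gamma>"
  obtains s where "\<And>t. fst (\<gamma> (t + s)) = 2 * arctan (exp t)"
    "nsol a E lam (\<lambda>t. snd (\<gamma> (t + s)))"
proof -
  obtain C where C: "C > 0" "\<And>t. fst (\<gamma> t) = 2 * arctan (C * exp t)"
    using theta_formula[OF assms] by blast
  define s where "s = - ln C"
  have e: "C * exp (t + s) = exp t" for t using C by (simp add: s_def exp_diff)
  have f: "fst (\<gamma> (t + s)) = 2 * arctan (exp t)" for t using C(2)[of "t+s"] e[of t] by simp
  have "((\<lambda>t. snd (\<gamma> (t + s))) has_real_derivative Gf a E lam (exp t) (snd (\<gamma> (t + s)))) (at t)" for t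
  proof -
    have "((\<lambda>t. snd (\<gamma> t)) has_real_derivative snd (theta_field a E lam (\<gamma> (t+s)))) (at (t+s))"
      by (rule orbit_comp(2)[OF assms])
    moreover have "\<gamma> (t+s) = (2 * arctan (exp t), snd (\<gamma> (t+s)))" using f[of t] by (metis prod.collapse)
    ultimately have d: "((\<lambda>t. snd (\<gamma> t)) has_real_derivative Gf a E lam (exp t) (snd (\<gamma> (t + s)))) (at (t+s))"
      by (metis field_2arctan snd_conv)
    have dg: "((\<lambda>t. t + s) has_real_derivative 1) (at t)" by (intro derivative_eq_intros) auto
    have "((\<lambda>t. snd (\<gamma> (t + s))) has_real_derivative Gf a E lam (exp t) (snd (\<gamma> (t + s))) * 1) (at t)"
      using DERIV_chain2[where f="\<lambda>t. snd (\<gamma> t)" and g="\<lambda>t. t + s" and x=t, OF d dg] by simp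
    thus ?thesis by simp
  qed
  hence "nsol a E lam (\<lambda>t. snd (\<gamma> (t + s)))" by (simp add: nsol_def)
  thus ?thesis using that f by blast
qed

lemma shift_at_bot: "filterlim (\<lambda>t::real. t + s) at_bot at_bot"
proof (unfold filterlim_at_bot, intro allI)
  fix Z :: real
  show "eventually (\<lambda>t. t + s \<le> Z) at_bot"
    unfolding eventually_at_bot_linorder by (rule exI[of _ "Z - s"]) auto
qed

lemma shift_at_top: "filterlim (\<lambda>t::real. t + s) at_top at_top"
  using filterlim_tendsto_add_at_top[OF tendsto_const[of s] filterlim_ident] by (simp add: add.commute)




lemma cos_lower: "cos (x::real) \<ge> 1 - x^2/2"
proof -
  have "cos x = cos (2 * (x/2))" by simp
  also have "\<dots> = 1 - 2 * (sin (x/2))^2" by (rule cos_double_sin)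
  finally have c: "cos x = 1 - 2 * (sin (x/2))^2" .
  have "\<bar>sin (x/2)\<bar> \<le> \<bar>x/2\<bar>" by (rule abs_sin_x_le_abs_x)
  hence "(sin (x/2))^2 \<le> (x/2)^2" by (metis abs_le_square_iff)
  thus ?thesis using c by (simp add: power_divide)
qed

lemma cos_small: "\<bar>x::real\<bar> \<le> 1/2 \<Longrightarrow> cos x \<ge> 7/8"
proof -
  assume "\<bar>x\<bar> \<le> 1/2"
  hence "x^2 \<le> (1/2)^2" using abs_le_square_iff[of x "1/2"] by simp
  hence "x^2/2 \<le> 1/8" by (simp add: power_divide)
  thus ?thesis using cos_lower[of x] by linarith
qed

definition DG :: "real \<Rightarrow> real \<Rightarrow> real \<Rightarrow> real \<Rightarrow> real" where
  "DG a E u x = 2 * a * sg u * cg u * sin x + 2 * a * E * (sg u)^2 * cos x - cos x"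

context
  fixes a lam :: real
  assumes a0: "0 < a" and a1: "a < 1/2" and lam: "lam \<le> -1 + a"
begin


lemma s_facts: "u > 0 \<Longrightarrow> 0 < sg u \<and> sg u \<le> 1 \<and> \<bar>cg u\<bar> \<le> 1"
  using sg_pos[of u] sg_abs[of u] cg_abs[of u] by auto

lemma L_neg:
  assumes u: "u > 0" and E: "0 \<le> E" "E \<le> 1" and sx: "sin x \<ge> 0"
  shows "Gf a E lam u x < 0"
proof -
  define s where "s = sg u"
  define c where "c = cg u"
  have s: "0 < s" "s \<le> 1" "\<bar>c\<bar> \<le> 1" using s_facts[OF u] by (auto simp: s_def c_def)
  have "\<bar>c * cos x\<bar> \<le> 1" using s(3) abs_cos_le_one[of x] by (simp add: abs_mult mult_le_one)
  have "\<bar>2 * a * s * c * cos x\<bar> = 2 * a * s * \<bar>c * cos x\<bar>" using a0 s by (simp add: abs_mult)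
  also have "\<dots> \<le> 2 * a * s * 1" using \<open>\<bar>c * cos x\<bar> \<le> 1\<close> a0 s by (intro mult_left_mono) auto
  finally have t1: "- 2 * a * s * c * cos x \<le> 2 * a * s" by (simp add: abs_le_iff)
  have "2 * a * E * s^2 \<le> 1"
  proof -
    have "E * s^2 \<le> 1" using E s by (simp add: mult_le_one power_le_one)
    hence "2 * a * (E * s^2) \<le> 2 * a * 1" using a0 by (intro mult_left_mono) auto
    thus ?thesis using a1 by (simp add: mult.assoc)
  qed
  hence "2 * a * E * s^2 * sin x \<le> 1 * sin x" using sx by (intro mult_right_mono) auto
  hence t2: "2 * a * E * s^2 * sin x - sin x \<le> 0" by simp
  have "Gf a E lam u x \<le> 2 * a * s + 2 * lam * s" using t1 t2 unfolding Gf_def s_def[symmetric] c_def[symmetric] by linarith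
  also have "\<dots> = 2 * s * (a + lam)" by (simp add: algebra_simps)
  also have "\<dots> < 0" using s a1 lam by (intro mult_pos_neg) auto
  finally show ?thesis .
qed

lemma L_lower:
  assumes u: "u > 0" and E: "0 \<le> E" "E \<le> 1"
  shows "Gf a E lam u x \<ge> - sin x - sg u * (2 + 2 * \<bar>lam\<bar>)"
proof -
  define s where "s = sg u"
  define c where "c = cg u"
  have s: "0 < s" "s \<le> 1" "\<bar>c\<bar> \<le> 1" using s_facts[OF u] by (auto simp: s_def c_def)
  have "\<bar>c * cos x\<bar> \<le> 1" using s(3) abs_cos_le_one[of x] by (simp add: abs_mult mult_le_one)
  hence t1: "\<bar>2 * a * s * c * cos x\<bar> \<le> s" using a0 a1 s
  proof -
    have "\<bar>2 * a * s * c * cos x\<bar> = 2 * a * s * \<bar>c * cos x\<bar>" using a0 s by (simp add: abs_mult)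
    also have "\<dots> \<le> 2 * a * s * 1" using \<open>\<bar>c * cos x\<bar> \<le> 1\<close> a0 s by (intro mult_left_mono) auto
    also have "\<dots> \<le> s" using a1 s by simp
    finally show ?thesis .
  qed
  have "\<bar>E * s * sin x\<bar> \<le> 1" using E s abs_sin_le_one[of x] by (simp add: abs_mult mult_le_one)
  have t2: "\<bar>2 * a * E * s^2 * sin x\<bar> \<le> s"
  proof -
    have "\<bar>2 * a * E * s^2 * sin x\<bar> = 2 * a * s * \<bar>E * s * sin x\<bar>" using a0 s by (simp add: abs_mult power2_eq_square)
    also have "\<dots> \<le> 2 * a * s * 1" using \<open>\<bar>E * s * sin x\<bar> \<le> 1\<close> a0 s by (intro mult_left_mono) auto
    also have "\<dots> \<le> s" using a1 s by simp
    finally show ?thesis .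
  qed
  have "-\<bar>lam\<bar> * s \<le> lam * s" using s by (intro mult_right_mono) auto
  hence t3: "2 * lam * s \<ge> - 2 * \<bar>lam\<bar> * s" by (simp add: mult.commute)
  have "Gf a E lam u x = - 2 * a * s * c * cos x + 2 * a * E * s^2 * sin x - sin x + 2 * lam * s"
    by (simp add: Gf_def s_def c_def)
  moreover have "- sin x - s * (2 + 2 * \<bar>lam\<bar>) = - sin x - 2 * s - 2 * \<bar>lam\<bar> * s" by (simp add: algebra_simps)
  moreover have "- s \<le> - 2 * a * s * c * cos x" "- s \<le> 2 * a * E * s^2 * sin x" using t1 t2 by (simp_all only: abs_le_iff) linarith+
  ultimately show ?thesis using t3 unfolding s_def[symmetric] by linarith
qed

lemma L_diffE: "Gf a E1 lam u x - Gf a E2 lam u x = 2 * a * (E1 - E2) * (sg u)^2 * sin x"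
  by (simp add: Gf_def algebra_simps)

lemma L_deriv: "(Gf a E lam u has_real_derivative DG a E u x) (at x)"
  unfolding Gf_def DG_def by (rule derivative_eq_intros refl | simp)+

lemma L_DG:
  assumes u: "u > 0" and E: "0 \<le> E" "E \<le> 1"
  shows "\<bar>DG a E u x + cos x\<bar> \<le> 2 * sg u"
proof -
  define s where "s = sg u"
  define c where "c = cg u"
  have s: "0 < s" "s \<le> 1" "\<bar>c\<bar> \<le> 1" using s_facts[OF u] by (auto simp: s_def c_def)
  have "\<bar>c * sin x\<bar> \<le> 1" using s(3) abs_sin_le_one[of x] by (simp add: abs_mult mult_le_one)
  have t1: "\<bar>2 * a * s * c * sin x\<bar> \<le> s"
  proof -
    have "\<bar>2 * a * s * c * sin x\<bar> = 2 * a * s * \<bar>c * sin x\<bar>" using a0 s by (simp add: abs_mult)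
    also have "\<dots> \<le> 2 * a * s * 1" using \<open>\<bar>c * sin x\<bar> \<le> 1\<close> a0 s by (intro mult_left_mono) auto
    also have "\<dots> \<le> s" using a1 s by simp
    finally show ?thesis .
  qed
  have "\<bar>E * s * cos x\<bar> \<le> 1" using E s abs_cos_le_one[of x] by (simp add: abs_mult mult_le_one)
  have t2: "\<bar>2 * a * E * s^2 * cos x\<bar> \<le> s"
  proof -
    have "\<bar>2 * a * E * s^2 * cos x\<bar> = 2 * a * s * \<bar>E * s * cos x\<bar>" using a0 s by (simp add: abs_mult power2_eq_square)
    also have "\<dots> \<le> 2 * a * s * 1" using \<open>\<bar>E * s * cos x\<bar> \<le> 1\<close> a0 s by (intro mult_left_mono) auto
    also have "\<dots> \<le> s" using a1 s by simp
    finally show ?thesis .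
  qed
  have "DG a E u x + cos x = 2 * a * s * c * sin x + 2 * a * E * s^2 * cos x" by (simp add: DG_def s_def c_def)
  moreover have "\<bar>2 * a * s * c * sin x + 2 * a * E * s^2 * cos x\<bar> \<le> \<bar>2 * a * s * c * sin x\<bar> + \<bar>2 * a * E * s^2 * cos x\<bar>"
    by (rule abs_triangle_ineq)
  ultimately show ?thesis using t1 t2 unfolding s_def[symmetric] by linarith
qed

lemma L_mono_small:
  assumes u: "u > 0" and E: "0 \<le> E" "E \<le> 1" and s: "sg u \<le> 1/8"
    and x: "-1/2 \<le> x1" "x1 \<le> x2" "x2 \<le> 1/2"
  shows "Gf a E lam u x1 \<ge> Gf a E lam u x2"
proof (cases "x1 = x2")
  case False
  hence lt: "x1 < x2" using x by simp
  obtain z where z: "x1 < z" "z < x2" "Gf a E lam u x2 - Gf a E lam u x1 = (x2 - x1) * DG a E u z"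
    using MVT2[OF lt, of "Gf a E lam u" "DG a E u"] L_deriv by blast
  have "cos z \<ge> 7/8" using z x by (intro cos_small) auto
  hence "DG a E u z \<le> 0" using L_DG[OF u E, of z] s by (simp add: abs_le_iff)
  hence "(x2 - x1) * DG a E u z \<le> 0" using lt by (simp add: mult_nonneg_nonpos)
  thus ?thesis using z by simp
qed simp

lemma L_mono_negpi:
  assumes u: "u > 0" and E: "0 \<le> E" "E \<le> 1" and s: "sg u \<le> 1/8"
    and x: "-pi \<le> x1" "x1 \<le> x2" "x2 \<le> -pi + 1/2"
  shows "Gf a E lam u x2 - Gf a E lam u x1 \<ge> (x2 - x1) / 2"
proof (cases "x1 = x2")
  case False
  hence lt: "x1 < x2" using x by simp
  obtain z where z: "x1 < z" "z < x2" "Gf a E lam u x2 - Gf a E lam u x1 = (x2 - x1) * DG a E u z"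
    using MVT2[OF lt, of "Gf a E lam u" "DG a E u"] L_deriv by blast
  have "cos (z + pi) \<ge> 7/8" using z x by (intro cos_small) auto
  hence "cos z \<le> -7/8" by simp
  hence "DG a E u z \<ge> 1/2" using L_DG[OF u E, of z] s by (simp add: abs_le_iff)
  hence "(x2 - x1) * DG a E u z \<ge> (x2 - x1) * (1/2)" using lt by (intro mult_left_mono) auto
  thus ?thesis using z by simp
qed simp

end




lemma rev_deriv:
  assumes "(f has_real_derivative D) (at (t1 - \<tau>))"
  shows "((\<lambda>\<tau>. f (t1 - \<tau>)) has_real_derivative - D) (at \<tau>)"
proof -
  have dg: "((\<lambda>\<tau>. t1 - \<tau>) has_real_derivative -1) (at \<tau>)" by (intro derivative_eq_intros) auto
  show ?thesis using DERIV_chain2[where f=f and g="\<lambda>\<tau>. t1 - \<tau>" and x=\<tau>, OF assms dg] by simp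
qed

lemma ev_bot:
  fixes f :: "real \<Rightarrow> real"
  assumes "(f \<longlongrightarrow> (L::real)) at_bot" "e > 0"
  obtains T where "\<And>t. t \<le> T \<Longrightarrow> \<bar>f t - L\<bar> < e"
proof -
  have "eventually (\<lambda>t. dist (f t) L < e) at_bot" using tendstoD[OF assms] .
  hence "\<exists>N. \<forall>n\<le>N. dist (f n) L < e" by (simp only: eventually_at_bot_linorder)
  then obtain T where "\<And>t. t \<le> T \<Longrightarrow> dist (f t) L < e" by blast
  thus ?thesis using that by (auto simp: dist_real_def)
qed

lemma ev_top:
  fixes f :: "real \<Rightarrow> real"
  assumes "(f \<longlongrightarrow> (L::real)) at_top" "e > 0"
  obtains T where "\<And>t. t \<ge> T \<Longrightarrow> \<bar>f t - L\<bar> < e"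
proof -
  have "eventually (\<lambda>t. dist (f t) L < e) at_top" using tendstoD[OF assms] .
  hence "\<exists>N. \<forall>n\<ge>N. dist (f n) L < e" by (simp only: eventually_at_top_linorder)
  then obtain T where "\<And>t. t \<ge> T \<Longrightarrow> dist (f t) L < e" by blast
  thus ?thesis using that by (auto simp: dist_real_def)
qed

lemma sg_exp_top: "((\<lambda>t. sg (exp t)) \<longlongrightarrow> 0) at_top"
  using filterlim_compose[OF sg_tendsto0 exp_at_top] .

lemma sin_nonneg_negpi: "-2*pi \<le> x \<Longrightarrow> x \<le> -pi \<Longrightarrow> sin x \<ge> 0"
proof -
  assume "-2*pi \<le> x" "x \<le> -pi"
  hence "sin (x + 2*pi) \<ge> 0" by (intro sin_ge_zero) auto
  thus ?thesis by simp
qed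

lemma sin_ge_eta:
  assumes "0 < \<eta>" "\<eta> < 1/4" "-pi + 1/4 \<le> x" "x \<le> -\<eta>"
  shows "- sin x \<ge> sin \<eta>"
proof (cases "-x \<le> pi/2")
  case True
  have "sin \<eta> \<le> sin (-x)" using assms True by (intro sin_monotone_2pi_le) auto
  thus ?thesis by simp
next
  case False
  have "sin \<eta> \<le> sin (pi - (-x))" using assms False pi_gt3 by (intro sin_monotone_2pi_le) auto
  thus ?thesis by simp
qed

context
  fixes a lam :: real
  assumes a0: "0 < a" and a1: "a < 1/2" and lam: "lam \<le> -1 + a"
begin

lemmas Lneg = L_neg[OF a0 a1 lam]
lemmas Llower = L_lower[OF a0 a1 lam]
lemmas Lsmall = L_mono_small[OF a0 a1 lam]
lemmas Lnegpi = L_mono_negpi[OF a0 a1 lam]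

lemma nsol_neg:
  assumes E: "0 \<le> E" "E \<le> 1" and ns: "nsol a E lam Th" and lim: "(Th \<longlongrightarrow> 0) at_bot"
  shows "Th t < 0"
proof -
  have der: "\<And>t. (Th has_real_derivative Gf a E lam (exp t) (Th t)) (at t)" using ns by (simp add: nsol_def)
  obtain T where T: "\<And>t. t \<le> T \<Longrightarrow> \<bar>Th t - 0\<bar> < pi/2" using ev_bot[OF lim, of "pi/2"] by auto
  have bk: "False" if t1: "t1 \<le> T" "Th t1 > 0" for t1
  proof -
    define f where "f \<tau> = Th t1 / 2 - Th (t1 - \<tau>)" for \<tau>
    have df: "(f has_real_derivative Gf a E lam (exp (t1 - \<tau>)) (Th (t1 - \<tau>))) (at \<tau>)" for \<tau>
      unfolding f_def using DERIV_diff[OF DERIV_const rev_deriv[OF der[of "t1 - \<tau>"]]] by simp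
    have neg: "f \<tau> < 0" if "\<tau> \<ge> 0" for \<tau>
    proof (rule barrier_all[of 0 f, OF df])
      show "f 0 < 0" using t1 by (simp add: f_def)
      show "Gf a E lam (exp (t1 - x)) (Th (t1 - x)) < 0" if "x \<ge> 0" "f x = 0" for x
      proof -
        have "Th (t1 - x) = Th t1 / 2" using that by (simp add: f_def)
        moreover have "Th t1 < pi/2" using T[OF t1(1)] by simp
        ultimately have "sin (Th (t1 - x)) \<ge> 0" using t1 by (intro sin_ge_zero) auto
        thus ?thesis by (intro Lneg E) auto
      qed
    qed (use that in auto)
    obtain T' where T': "\<And>t. t \<le> T' \<Longrightarrow> \<bar>Th t - 0\<bar> < Th t1 / 2" using ev_bot[OF lim, of "Th t1 / 2"] t1 by auto
    define t where "t = min T' t1"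
    have "f (t1 - t) < 0" using neg[of "t1 - t"] by (simp add: t_def)
    hence "Th t > Th t1 / 2" by (simp add: f_def)
    moreover have "\<bar>Th t\<bar> < Th t1 / 2" using T'[of t] by (simp add: t_def)
    ultimately show False by simp
  qed
  have neg0: "Th t1 < 0" if "t1 \<le> T" for t1
  proof (rule ccontr)
    assume "\<not> Th t1 < 0"
    hence "Th t1 = 0" using bk[OF that] by force
    hence "Gf a E lam (exp t1) (Th t1) < 0" by (intro Lneg E) auto
    then obtain d where d: "d > 0" "\<And>h. h > 0 \<Longrightarrow> h < d \<Longrightarrow> Th t1 < Th (t1 - h)"
      using DERIV_neg_dec_left[OF der[of t1]] by auto
    have "Th (t1 - d/2) > 0" using d(2)[of "d/2"] d(1) \<open>Th t1 = 0\<close> by simp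
    thus False using bk[of "t1 - d/2"] that d(1) by simp
  qed
  define t0 where "t0 = min t T"
  show ?thesis
  proof (rule barrier_all[of t0 Th, OF der])
    show "Th t0 < 0" by (rule neg0) (simp add: t0_def)
    show "Gf a E lam (exp x) (Th x) < 0" if "Th x = 0" for x using that by (intro Lneg E) auto
  qed (simp add: t0_def)
qed

lemma nsol_gt_negpi:
  assumes E: "0 \<le> E" "E \<le> 1" and ns: "nsol a E lam Th" and lim: "(Th \<longlongrightarrow> -pi) at_top"
  shows "Th t > -pi"
proof (rule ccontr)
  assume "\<not> Th t > -pi"
  hence t1: "Th t \<le> -pi" by simp
  have der: "\<And>t. (Th has_real_derivative Gf a E lam (exp t) (Th t)) (at t)" using ns by (simp add: nsol_def)
  obtain t2 where t2: "t2 \<ge> t" "Th t2 < -pi"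
  proof (cases "Th t < -pi")
    case True thus ?thesis using that by auto
  next
    case False
    hence "Th t = -pi" using t1 by simp
    hence "Gf a E lam (exp t) (Th t) < 0" by (intro Lneg E) auto
    then obtain d where d: "d > 0" "\<And>h. h > 0 \<Longrightarrow> h < d \<Longrightarrow> Th t > Th (t + h)"
      using DERIV_neg_dec_right[OF der[of t]] by auto
    show ?thesis using that[of "t + d/2"] d(2)[of "d/2"] d(1) \<open>Th t = -pi\<close> by simp
  qed
  have below: "Th s < -pi" if "s \<ge> t2" for s
  proof -
    have dd: "((\<lambda>s. Th s + pi) has_real_derivative Gf a E lam (exp x) (Th x)) (at x)" for x
      using DERIV_add[OF der[of x] DERIV_const[of pi]] by simp
    have "Th s + pi < 0"
    proof (rule barrier_all[of t2 "\<lambda>s. Th s + pi", OF dd])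
    show "Th t2 + pi < 0" using t2 by simp
    show "Gf a E lam (exp x) (Th x) < 0" if "Th x + pi = 0" for x
    proof -
      have "Th x = -pi" using that by simp
      thus ?thesis by (intro Lneg E) auto
    qed
  qed (use that in auto)
  thus ?thesis by simp
  qed
  obtain T where T: "\<And>s. s \<ge> T \<Longrightarrow> \<bar>Th s - - pi\<bar> < pi" using ev_top[OF lim, of pi] by auto
  define T' where "T' = max T t2"
  have dec: "Th s < Th T'" if "s > T'" for s
  proof (rule DERIV_neg_imp_decreasing[OF that])
    fix x assume x: "T' \<le> x" "x \<le> s"
    have "Th x < -pi" using below[of x] x by (simp add: T'_def)
    moreover have "Th x > -2*pi" using T[of x] x by (simp add: T'_def)
    ultimately have "sin (Th x) \<ge> 0" by (intro sin_nonneg_negpi) auto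
    thus "\<exists>y. (Th has_real_derivative y) (at x) \<and> y < 0" using der[of x] by (intro exI[of _ "Gf a E lam (exp x) (Th x)"] conjI Lneg E) auto
  qed
  have m: "-pi - Th T' > 0" using below[of T'] by (simp add: T'_def)
  obtain T'' where T'': "\<And>s. s \<ge> T'' \<Longrightarrow> \<bar>Th s - - pi\<bar> < -pi - Th T'" using ev_top[OF lim m] by auto
  define s where "s = max T'' T' + 1"
  have "Th s < Th T'" using dec[of s] by (simp add: s_def)
  moreover have "\<bar>Th s - - pi\<bar> < -pi - Th T'" using T''[of s] by (simp add: s_def)
  ultimately show False by simp
qed

end



context
  fixes a lam :: real
  assumes a0: "0 < a" and a1: "a < 1/2" and lam: "lam \<le> -1 + a"
begin

lemmas Lneg' = L_neg[OF a0 a1 lam]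
lemmas Llower' = L_lower[OF a0 a1 lam]
lemmas Lsmall' = L_mono_small[OF a0 a1 lam]
lemmas Lnegpi' = L_mono_negpi[OF a0 a1 lam]
lemmas nneg = nsol_neg[OF a0 a1 lam]
lemmas ngt = nsol_gt_negpi[OF a0 a1 lam]

lemma cmp:
  assumes E: "0 \<le> E'" "E' < E" "E \<le> 1"
    and n1: "nsol a E' lam Th1" and n2: "nsol a E lam Th2"
    and l1: "(Th1 \<longlongrightarrow> 0) at_bot" and l2: "(Th2 \<longlongrightarrow> 0) at_bot"
    and l2t: "(Th2 \<longlongrightarrow> -pi) at_top"
  shows "(Th1 \<longlongrightarrow> 0) at_top"
proof -
  have E1: "0 \<le> E'" "E' \<le> 1" and E2: "0 \<le> E" "E \<le> 1" using E by auto
  have der1: "\<And>t. (Th1 has_real_derivative Gf a E' lam (exp t) (Th1 t)) (at t)" using n1 by (simp add: nsol_def)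
  have der2: "\<And>t. (Th2 has_real_derivative Gf a E lam (exp t) (Th2 t)) (at t)" using n2 by (simp add: nsol_def)
  have neg1: "\<And>t. Th1 t < 0" by (rule nneg[OF E1 n1 l1])
  have neg2: "\<And>t. Th2 t < 0" by (rule nneg[OF E2 n2 l2])
  have gt2: "\<And>t. Th2 t > -pi" by (rule ngt[OF E2 n2 l2t])
  define s where "s t = sg (exp t)" for t
  have spos: "\<And>t. s t > 0" unfolding s_def by (simp add: sg_pos)
  define d where "d t = Th1 t - Th2 t" for t
  define D where "D t = Gf a E' lam (exp t) (Th1 t) - Gf a E lam (exp t) (Th2 t)" for t
  have dd: "\<And>t. (d has_real_derivative D t) (at t)"
    unfolding d_def D_def by (rule DERIV_diff[OF der1 der2])
  define F where "F t = Gf a E' lam (exp t) (Th2 t) - Gf a E lam (exp t) (Th2 t)" for t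
  have Fpos: "F t > 0" for t
  proof -
    have "sin (- Th2 t) > 0" using neg2[of t] gt2[of t] by (intro sin_gt_zero) auto
    hence sn: "sin (Th2 t) < 0" by simp
    have "2 * a * (E' - E) < 0" using a0 E by (intro mult_pos_neg) auto
    moreover have "(sg (exp t))^2 > 0" using sg_pos[of "exp t"] by simp
    ultimately have "2 * a * (E' - E) * (sg (exp t))^2 < 0" by (rule mult_neg_pos)
    hence "2 * a * (E' - E) * (sg (exp t))^2 * sin (Th2 t) > 0" using sn by (intro mult_neg_neg)
    thus ?thesis unfolding F_def by (simp only: L_diffE[OF a0 a1 lam])
  qed
  have Dsplit: "D t = (Gf a E' lam (exp t) (Th1 t) - Gf a E' lam (exp t) (Th2 t)) + F t" for t
    by (simp add: D_def F_def)
  have dlim: "(d \<longlongrightarrow> 0) at_bot" unfolding d_def using tendsto_diff[OF l1 l2] by simp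
  obtain T1 where T1: "\<And>t. t \<le> T1 \<Longrightarrow> \<bar>Th1 t - 0\<bar> < 1/2" using ev_bot[OF l1, of "1/2"] by auto
  obtain T2 where T2: "\<And>t. t \<le> T2 \<Longrightarrow> \<bar>Th2 t - 0\<bar> < 1/2" using ev_bot[OF l2, of "1/2"] by auto
  define T where "T = min T1 (min T2 (ln (1/16)))"
  have sT: "s t \<le> 1/8" if "t \<le> T" for t
  proof -
    have "t \<le> ln (1/16)" using that by (simp add: T_def)
    hence "exp t \<le> exp (ln (1/16))" by (rule exp_le_cancel_iff[THEN iffD2])
    also have "exp (ln (1/16)) = (1/16::real)" by simp
    finally have "exp t \<le> 1/16" .
    thus ?thesis using sg_le[of "exp t"] by (simp add: s_def)
  qed
  have key: "D t > 0" if "t \<le> T" "d t \<le> 0" for t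
  proof -
    have "Gf a E' lam (exp t) (Th1 t) \<ge> Gf a E' lam (exp t) (Th2 t)"
      using T1[of t] T2[of t] that sT[of t] by (intro Lsmall' E1) (auto simp: T_def d_def s_def)
    thus ?thesis using Dsplit[of t] Fpos[of t] by linarith
  qed
  have pos_bot: "d t1 > 0" if t1: "t1 \<le> T" for t1
  proof (rule ccontr)
    assume "\<not> d t1 > 0"
    hence "d t1 \<le> 0" by simp
    hence "D t1 > 0" using key t1 by auto
    then obtain \<delta> where \<delta>: "\<delta> > 0" "\<And>h. h > 0 \<Longrightarrow> h < \<delta> \<Longrightarrow> d (t1 - h) < d t1"
      using DERIV_pos_inc_left[OF dd[of t1]] by auto
    define t2 where "t2 = t1 - \<delta>/2"
    have t2: "d t2 < 0" "t2 \<le> T" using \<delta>(2)[of "\<delta>/2"] \<delta>(1) \<open>d t1 \<le> 0\<close> t1 by (auto simp: t2_def)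
    define f where "f \<tau> = d (t2 - \<tau>) - d t2 / 2" for \<tau>
    have df: "(f has_real_derivative - D (t2 - \<tau>)) (at \<tau>)" for \<tau>
      unfolding f_def using DERIV_diff[OF rev_deriv[OF dd[of "t2 - \<tau>"]] DERIV_const] by simp
    have fneg: "f \<tau> < 0" if "\<tau> \<ge> 0" for \<tau>
    proof (rule barrier_all[of 0 f, OF df])
      show "f 0 < 0" using t2 by (simp add: f_def)
      show "- D (t2 - x) < 0" if "x \<ge> 0" "f x = 0" for x
      proof -
        have "d (t2 - x) \<le> 0" using that t2 by (simp add: f_def)
        thus ?thesis using key[of "t2 - x"] t2 that by simp
      qed
    qed (use that in auto)
    have m: "- d t2 / 2 > 0" using t2 by simp
    obtain T' where T': "\<And>t. t \<le> T' \<Longrightarrow> \<bar>d t - 0\<bar> < - d t2 / 2" using ev_bot[OF dlim m] by auto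
    define t where "t = min T' t2"
    have "f (t2 - t) < 0" using fneg[of "t2 - t"] by (simp add: t_def)
    hence "d t < d t2 / 2" by (simp add: f_def)
    moreover have "\<bar>d t\<bar> < - d t2 / 2" using T'[of t] by (simp add: t_def)
    ultimately show False by simp
  qed
  have dpos: "d t > 0" for t
  proof -
    define t0 where "t0 = min t T"
    have dmd: "((\<lambda>t. - d t) has_real_derivative - D x) (at x)" for x using DERIV_minus[OF dd[of x]] .
    have "- d t < 0"
    proof (rule barrier_all[of t0 "\<lambda>t. - d t", OF dmd])
      show "- d t0 < 0" using pos_bot[of t0] by (simp add: t0_def)
      show "- D x < 0" if "x \<ge> t0" "- d x = 0" for x
      proof -
        have "Th1 x = Th2 x" using that by (simp add: d_def)
        hence "D x = F x" by (simp add: D_def F_def)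
        thus ?thesis using Fpos[of x] by simp
      qed
    qed (simp add: t0_def)
    thus ?thesis by simp
  qed
  define B0 where "B0 = 2 + 2 * \<bar>lam\<bar>"
  have B0: "B0 > 0" by (simp add: B0_def add_pos_nonneg)
  define c14 where "c14 = sin (1/4::real)"
  have c14: "c14 > 0" unfolding c14_def using pi_gt3 by (intro sin_gt_zero) auto
  obtain Ta where Ta: "\<And>t. t \<ge> Ta \<Longrightarrow> \<bar>Th2 t - - pi\<bar> < 1/2" using ev_top[OF l2t, of "1/2"] by auto
  have mpos: "min (1/8) (c14 / (2 * B0)) > 0" using c14 B0 by simp
  obtain Tb where Tb: "\<And>t. t \<ge> Tb \<Longrightarrow> \<bar>s t - 0\<bar> < min (1/8) (c14 / (2 * B0))"
    using ev_top[OF sg_exp_top mpos] unfolding s_def by auto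
  define T2 where "T2 = max Ta Tb"
  have sm: "s t \<le> 1/8" "s t * B0 < c14 / 2" if "t \<ge> T2" for t
  proof -
    have h: "s t < 1/8" "s t < c14 / (2 * B0)" using Tb[of t] that spos[of t] by (auto simp: T2_def)
    show "s t \<le> 1/8" using h by simp
    show "s t * B0 < c14 / 2" using h(2) B0 by (simp add: field_simps)
  qed
  have "\<exists>t3. t3 \<ge> T2 \<and> Th1 t3 > -pi + 1/4"
  proof (rule ccontr)
    assume nt: "\<not> ?thesis"
    have up: "Th1 t \<le> -pi + 1/4" if "t \<ge> T2" for t using that nt by (metis not_le)
    have Dge: "D t \<ge> d t / 2" if "t \<ge> T2" for t
    proof -
      have "Gf a E' lam (exp t) (Th1 t) - Gf a E' lam (exp t) (Th2 t) \<ge> (Th1 t - Th2 t) / 2"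
        using gt2[of t] dpos[of t] up[OF that] sm(1)[OF that]
        by (intro Lnegpi' E1) (auto simp: d_def s_def)
      thus ?thesis using Dsplit[of t] Fpos[of t] by (simp add: d_def)
    qed
    have dmono: "d t \<ge> d T2" if "t \<ge> T2" for t
      using grow[of T2 d D 0 t] dd Dge dpos that by (smt (verit) half_gt_zero)
    show False
    proof (rule grow_contra[of T2 d D "d T2 / 2" pi])
      show "\<And>x. T2 \<le> x \<Longrightarrow> (d has_real_derivative D x) (at x)" using dd by blast
      show "d T2 / 2 \<le> D x" if "T2 \<le> x" for x using Dge[OF that] dmono[OF that] by simp
      show "0 < d T2 / 2" using dpos[of T2] by simp
      show "d x \<le> pi" for x using neg1[of x] gt2[of x] by (simp add: d_def)
    qed
  qed
  then obtain t3 where t3: "t3 \<ge> T2" "Th1 t3 > -pi + 1/4" by blast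
  have sin14: "sin (-pi + 1/4) = - c14" by (simp add: c14_def sin_add)
  have C2: "Th1 t > -pi + 1/4" if "t \<ge> t3" for t
  proof -
    have dm: "((\<lambda>t. (-pi + 1/4) - Th1 t) has_real_derivative - Gf a E' lam (exp x) (Th1 x)) (at x)" for x
      using DERIV_diff[OF DERIV_const der1[of x]] by simp
    have "(-pi + 1/4) - Th1 t < 0"
    proof (rule barrier_all[of t3 _, OF dm])
      show "(-pi + 1/4) - Th1 t3 < 0" using t3 by simp
      show "- Gf a E' lam (exp x) (Th1 x) < 0" if "x \<ge> t3" "(-pi + 1/4) - Th1 x = 0" for x
      proof -
        have eq: "Th1 x = -pi + 1/4" using that by simp
        have "Gf a E' lam (exp x) (Th1 x) \<ge> - sin (Th1 x) - sg (exp x) * (2 + 2 * \<bar>lam\<bar>)"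
          by (intro Llower' E1) simp
        moreover have "sg (exp x) * B0 < c14 / 2" using sm(2)[of x] that t3 by (simp add: s_def)
        ultimately show ?thesis using eq sin14 c14 by (simp add: B0_def)
      qed
    qed (use that in auto)
    thus ?thesis by simp
  qed
  have C3: "\<exists>t5. \<forall>t\<ge>t5. Th1 t > - \<eta>" if eta: "0 < \<eta>" "\<eta> < 1/4" for \<eta>
  proof -
    have seta: "sin \<eta> > 0" using eta pi_gt3 by (intro sin_gt_zero) auto
    have mp: "sin \<eta> / (2 * B0) > 0" using seta B0 by simp
    obtain Tc where Tc: "\<And>t. t \<ge> Tc \<Longrightarrow> \<bar>s t - 0\<bar> < sin \<eta> / (2 * B0)"
      using ev_top[OF sg_exp_top mp] unfolding s_def by auto
    define T3 where "T3 = max Tc t3"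
    have reg: "Gf a E' lam (exp t) (Th1 t) \<ge> sin \<eta> / 2" if "t \<ge> T3" "Th1 t \<le> - \<eta>" for t
    proof -
      have "Gf a E' lam (exp t) (Th1 t) \<ge> - sin (Th1 t) - sg (exp t) * (2 + 2 * \<bar>lam\<bar>)"
        by (intro Llower' E1) simp
      moreover have "- sin (Th1 t) \<ge> sin \<eta>" using C2[of t] that eta by (intro sin_ge_eta) (auto simp: T3_def)
      moreover have "s t * B0 < sin \<eta> / 2" using Tc[of t] that spos[of t] B0 by (auto simp: T3_def field_simps)
      ultimately show ?thesis by (simp add: s_def B0_def)
    qed
    have "\<exists>t5. t5 \<ge> T3 \<and> Th1 t5 > - \<eta>"
    proof (rule ccontr)
      assume nt: "\<not> ?thesis"
      have up: "Th1 t \<le> - \<eta>" if "t \<ge> T3" for t using that nt by (metis not_le)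
      show False
      proof (rule grow_contra[of T3 Th1 "\<lambda>t. Gf a E' lam (exp t) (Th1 t)" "sin \<eta> / 2" 0])
        show "\<And>x. T3 \<le> x \<Longrightarrow> (Th1 has_real_derivative Gf a E' lam (exp x) (Th1 x)) (at x)" using der1 by blast
        show "sin \<eta> / 2 \<le> Gf a E' lam (exp x) (Th1 x)" if "T3 \<le> x" for x using reg[OF that up[OF that]] .
        show "0 < sin \<eta> / 2" using seta by simp
        show "Th1 x \<le> 0" for x using neg1[of x] by simp
      qed
    qed
    then obtain t5 where t5: "t5 \<ge> T3" "Th1 t5 > - \<eta>" by blast
    have "Th1 t > - \<eta>" if "t \<ge> t5" for t
    proof -
      have dm: "((\<lambda>t. - \<eta> - Th1 t) has_real_derivative - Gf a E' lam (exp x) (Th1 x)) (at x)" for x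
        using DERIV_diff[OF DERIV_const der1[of x]] by simp
      have "- \<eta> - Th1 t < 0"
      proof (rule barrier_all[of t5 _, OF dm])
        show "- \<eta> - Th1 t5 < 0" using t5 by simp
        show "- Gf a E' lam (exp x) (Th1 x) < 0" if "x \<ge> t5" "- \<eta> - Th1 x = 0" for x
          using reg[of x] that t5 seta by simp
      qed (use that in auto)
      thus ?thesis by simp
    qed
    thus ?thesis by blast
  qed
  show ?thesis
  proof (rule tendstoI)
    fix e :: real assume e: "e > 0"
    define \<eta> where "\<eta> = min (e/2) (1/8)"
    have eta: "0 < \<eta>" "\<eta> < 1/4" "\<eta> < e" using e by (auto simp: \<eta>_def)
    obtain t5 where t5: "\<And>t. t \<ge> t5 \<Longrightarrow> Th1 t > - \<eta>" using C3[OF eta(1,2)] by auto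
    show "eventually (\<lambda>t. dist (Th1 t) 0 < e) at_top"
      unfolding eventually_at_top_linorder
    proof (intro exI[of _ t5] allI impI)
      fix t assume "t \<ge> t5"
      hence "- \<eta> < Th1 t" "Th1 t < 0" using t5 neg1 by auto
      thus "dist (Th1 t) 0 < e" using eta by (simp add: dist_real_def abs_if)
    qed
  qed
qed

end



definition Kf :: "real \<Rightarrow> real \<Rightarrow> real \<Rightarrow> real \<Rightarrow> real \<Rightarrow> real" where
  "Kf a E lam u x = x + Gf a E lam u x"

lemma lip_mvt:
  fixes f f' :: "real \<Rightarrow> real"
  assumes der: "\<And>z. (f has_real_derivative f' z) (at z)"
    and bd: "\<And>z. min x y \<le> z \<Longrightarrow> z \<le> max x y \<Longrightarrow> \<bar>f' z\<bar> \<le> L"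
  shows "\<bar>f x - f y\<bar> \<le> L * \<bar>x - y\<bar>"
proof -
  have main: "\<bar>f q - f p\<bar> \<le> L * \<bar>q - p\<bar>" if pq: "p < q" "\<And>z. p \<le> z \<Longrightarrow> z \<le> q \<Longrightarrow> \<bar>f' z\<bar> \<le> L" for p q
  proof -
    obtain z where z: "p < z" "z < q" "f q - f p = (q - p) * f' z" using MVT2[OF pq(1), of f f'] der by blast
    have "\<bar>f q - f p\<bar> = \<bar>q - p\<bar> * \<bar>f' z\<bar>" using z by (simp add: abs_mult)
    also have "\<dots> \<le> \<bar>q - p\<bar> * L" using pq(2)[of z] z by (intro mult_left_mono) auto
    finally show ?thesis by (simp add: mult.commute)
  qed
  consider "x < y" | "x = y" | "y < x" by linarith
  thus ?thesis
  proof cases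
    case 1 thus ?thesis using main[of x y] bd by (simp add: abs_minus_commute)
  next
    case 3 thus ?thesis using main[of y x] bd by simp
  qed simp
qed

lemma one_plus_sq_ne: "1 + (u::real)^2 \<noteq> 0"
proof -
  have "1 + u^2 > 0" by (simp add: add_pos_nonneg)
  thus ?thesis by simp
qed

lemma sg_cont: "continuous_on S sg"
  unfolding sg_def by (intro continuous_intros) (auto simp: one_plus_sq_ne)
lemma cg_cont: "continuous_on S cg"
  unfolding cg_def by (intro continuous_intros) (auto simp: one_plus_sq_ne)

lemma sg0: "sg 0 = 0" by (simp add: sg_def)

lemma sg_nonneg: "u \<ge> 0 \<Longrightarrow> sg u \<ge> 0" by (simp add: sg_def add_pos_nonneg)

context
  fixes a lam E :: real
  assumes a0: "0 < a" and a1: "a < 1/2" and E0: "0 \<le> E" and E1: "E \<le> 1"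
begin

lemma DG_bound:
  assumes u: "u \<ge> 0"
  shows "\<bar>DG a E u x + cos x\<bar> \<le> 2 * sg u"
proof -
  define s where "s = sg u"
  define c where "c = cg u"
  have s: "0 \<le> s" "s \<le> 1" "\<bar>c\<bar> \<le> 1" using sg_nonneg[OF u] sg_abs[of u] cg_abs[of u] by (auto simp: s_def c_def)
  have "\<bar>c * sin x\<bar> \<le> 1" using s(3) abs_sin_le_one[of x] by (simp add: abs_mult mult_le_one)
  have t1: "\<bar>2 * a * s * c * sin x\<bar> \<le> s"
  proof -
    have "\<bar>2 * a * s * c * sin x\<bar> = 2 * a * s * \<bar>c * sin x\<bar>" using a0 s by (simp add: abs_mult)
    also have "\<dots> \<le> 2 * a * s * 1" using \<open>\<bar>c * sin x\<bar> \<le> 1\<close> a0 s by (intro mult_left_mono) auto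
    also have "\<dots> = (2 * a) * s" by simp
    also have "\<dots> \<le> 1 * s" using a1 s by (intro mult_right_mono) auto
    also have "\<dots> = s" by simp
    finally show ?thesis .
  qed
  have "\<bar>E * s * cos x\<bar> \<le> 1" using E0 E1 s abs_cos_le_one[of x] by (simp add: abs_mult mult_le_one)
  have t2: "\<bar>2 * a * E * s^2 * cos x\<bar> \<le> s"
  proof -
    have "\<bar>2 * a * E * s^2 * cos x\<bar> = 2 * a * s * \<bar>E * s * cos x\<bar>" using a0 s by (simp add: abs_mult power2_eq_square)
    also have "\<dots> \<le> 2 * a * s * 1" using \<open>\<bar>E * s * cos x\<bar> \<le> 1\<close> a0 s by (intro mult_left_mono) auto
    also have "\<dots> = (2 * a) * s" by simp
    also have "\<dots> \<le> 1 * s" using a1 s by (intro mult_right_mono) auto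
    also have "\<dots> = s" by simp
    finally show ?thesis .
  qed
  have "DG a E u x + cos x = 2 * a * s * c * sin x + 2 * a * E * s^2 * cos x" by (simp add: DG_def s_def c_def)
  moreover have "\<bar>2 * a * s * c * sin x + 2 * a * E * s^2 * cos x\<bar> \<le> \<bar>2 * a * s * c * sin x\<bar> + \<bar>2 * a * E * s^2 * cos x\<bar>"
    by (rule abs_triangle_ineq)
  ultimately show ?thesis using t1 t2 unfolding s_def[symmetric] by linarith
qed

lemma K_deriv: "(Kf a E lam u has_real_derivative 1 + DG a E u x) (at x)"
  unfolding Kf_def Gf_def by (rule derivative_eq_intros refl | simp add: DG_def algebra_simps)+

lemma K_lip_global:
  assumes u: "u \<ge> 0"
  shows "\<bar>Kf a E lam u x - Kf a E lam u y\<bar> \<le> 4 * \<bar>x - y\<bar>"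
proof (rule lip_mvt[OF K_deriv])
  fix z
  have "\<bar>1 + DG a E u z\<bar> \<le> \<bar>1 - cos z\<bar> + \<bar>DG a E u z + cos z\<bar>" by linarith
  moreover have "\<bar>1 - cos z\<bar> \<le> 2" using abs_cos_le_one[of z] by linarith
  moreover have "\<bar>DG a E u z + cos z\<bar> \<le> 2" using DG_bound[OF u, of z] sg_abs[of u] by linarith
  ultimately show "\<bar>1 + DG a E u z\<bar> \<le> 4" by linarith
qed

lemma K_lip_local:
  assumes u: "u \<ge> 0" "4 * u \<le> 1/8" and xy: "\<bar>x\<bar> \<le> 1/2" "\<bar>y\<bar> \<le> 1/2"
  shows "\<bar>Kf a E lam u x - Kf a E lam u y\<bar> \<le> 1/4 * \<bar>x - y\<bar>"
proof (rule lip_mvt[OF K_deriv])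
  fix z assume z: "min x y \<le> z" "z \<le> max x y"
  have "\<bar>z\<bar> \<le> 1/2" using z xy by (auto simp: abs_le_iff)
  hence cz: "cos z \<ge> 7/8" by (rule cos_small)
  have "\<bar>1 + DG a E u z\<bar> \<le> \<bar>1 - cos z\<bar> + \<bar>DG a E u z + cos z\<bar>" by linarith
  moreover have "\<bar>1 - cos z\<bar> \<le> 1/8" using cz cos_le_one[of z] by linarith
  moreover have "\<bar>DG a E u z + cos z\<bar> \<le> 1/8" using DG_bound[OF u(1), of z] sg_le[OF u(1)] u by linarith
  ultimately show "\<bar>1 + DG a E u z\<bar> \<le> 1/4" by linarith
qed

lemma K_zero:
  assumes u: "u \<ge> 0"
  shows "\<bar>Kf a E lam u 0\<bar> \<le> sg u * (2 + 2 * \<bar>lam\<bar>)"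
proof -
  define s where "s = sg u"
  define c where "c = cg u"
  have s: "0 \<le> s" "s \<le> 1" "\<bar>c\<bar> \<le> 1" using sg_nonneg[OF u] sg_abs[of u] cg_abs[of u] by (auto simp: s_def c_def)
  have "Kf a E lam u 0 = s * (2 * lam - 2 * a * c)" by (simp add: Kf_def Gf_def s_def c_def algebra_simps)
  hence "\<bar>Kf a E lam u 0\<bar> = s * \<bar>2 * lam - 2 * a * c\<bar>" using s by (simp add: abs_mult)
  also have "\<dots> \<le> s * (2 + 2 * \<bar>lam\<bar>)"
  proof (intro mult_left_mono s(1))
    have "\<bar>a * c\<bar> \<le> 1" using a0 a1 s by (simp add: abs_mult mult_le_one)
    thus "\<bar>2 * lam - 2 * a * c\<bar> \<le> 2 + 2 * \<bar>lam\<bar>" by (simp add: abs_le_iff) linarith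
  qed
  finally show ?thesis by (simp add: s_def)
qed

lemma K_bound:
  assumes u: "u \<ge> 0"
  shows "\<bar>Kf a E lam u x\<bar> \<le> (2 + 2 * \<bar>lam\<bar>) + 4 * \<bar>x\<bar>"
proof -
  have "\<bar>Kf a E lam u x\<bar> \<le> \<bar>Kf a E lam u 0\<bar> + \<bar>Kf a E lam u x - Kf a E lam u 0\<bar>" by linarith
  moreover have "\<bar>Kf a E lam u 0\<bar> \<le> 2 + 2 * \<bar>lam\<bar>"
  proof -
    have "sg u \<le> 1" using sg_abs[of u] by simp
    hence "sg u * (2 + 2 * \<bar>lam\<bar>) \<le> 1 * (2 + 2 * \<bar>lam\<bar>)" by (intro mult_right_mono) auto
    thus ?thesis using K_zero[OF u] by simp
  qed
  moreover have "\<bar>Kf a E lam u x - Kf a E lam u 0\<bar> \<le> 4 * \<bar>x\<bar>" using K_lip_global[OF u, of x 0] by simp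
  ultimately show ?thesis by linarith
qed

lemma K_small:
  assumes u: "u \<ge> 0" "u * (2 + 2 * \<bar>lam\<bar>) \<le> 1/16" "4 * u \<le> 1/8" and x: "\<bar>x\<bar> \<le> 1/2"
  shows "\<bar>Kf a E lam u x\<bar> \<le> 1/4"
proof -
  have "\<bar>Kf a E lam u x\<bar> \<le> \<bar>Kf a E lam u 0\<bar> + \<bar>Kf a E lam u x - Kf a E lam u 0\<bar>" by linarith
  moreover have "\<bar>Kf a E lam u 0\<bar> \<le> 1/8"
  proof -
    have "\<bar>Kf a E lam u 0\<bar> \<le> sg u * (2 + 2 * \<bar>lam\<bar>)" by (rule K_zero[OF u(1)])
    also have "\<dots> \<le> (2 * u) * (2 + 2 * \<bar>lam\<bar>)" using sg_le[OF u(1)] by (intro mult_right_mono) auto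
    finally show ?thesis using u(2) by simp
  qed
  moreover have "\<bar>Kf a E lam u x - Kf a E lam u 0\<bar> \<le> 1/4 * \<bar>x - 0\<bar>" using K_lip_local[of u x 0] u x by simp
  ultimately show ?thesis using x by simp
qed

end

lemma K00: "Kf a E lam 0 0 = 0" by (simp add: Kf_def Gf_def sg0)

lemma K_cont: "continuous_on S g \<Longrightarrow> continuous_on S (\<lambda>x. Kf a E lam x (g x))"
  unfolding Kf_def Gf_def by (intro continuous_intros continuous_on_compose2[OF sg_cont] continuous_on_compose2[OF cg_cont]) auto




definition raw :: "real \<Rightarrow> real \<Rightarrow> real \<Rightarrow> real \<Rightarrow> (real \<Rightarrow> real) \<Rightarrow> real \<Rightarrow> real" where
  "raw a E lam M \<psi> \<sigma> = (if \<sigma> \<le> 0 then 0 else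
     exp (- (M * \<sigma>)) * (integral {0..\<sigma>} (\<lambda>x. Kf a E lam x (exp (M * x) * \<psi> x)) / \<sigma>))"

lemma I_deriv:
  fixes h :: "real \<Rightarrow> real"
  assumes h: "continuous_on UNIV h" and s: "\<sigma> > 0"
  shows "((\<lambda>\<sigma>. integral {0..\<sigma>} h) has_real_derivative h \<sigma>) (at \<sigma>)"
proof -
  have c: "continuous_on {0..\<sigma>+1} h" by (rule continuous_on_subset[OF h]) simp
  have mem: "\<sigma> \<in> {0..\<sigma>+1}" using s by simp
  have d: "((\<lambda>\<sigma>. integral {0..\<sigma>} h) has_real_derivative h \<sigma>) (at \<sigma> within {0..\<sigma>+1})"
    by (rule integral_has_real_derivative[OF c mem])
  have i: "\<sigma> \<in> interior {0..\<sigma>+1}" using s by simp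
  have eq: "at \<sigma> within {0..\<sigma>+1} = at \<sigma>" by (rule at_within_interior[OF i])
  show ?thesis using d unfolding eq .
qed

lemma int_bound:
  fixes h :: "real \<Rightarrow> real"
  assumes h: "continuous_on UNIV h" and s: "\<sigma> \<ge> 0" and b: "\<And>x. x \<in> {0..\<sigma>} \<Longrightarrow> \<bar>h x\<bar> \<le> c"
  shows "\<bar>integral {0..\<sigma>} h\<bar> \<le> c * \<sigma>"
proof -
  have hi: "h integrable_on {0..\<sigma>}" using h by (intro integrable_continuous_real) (rule continuous_on_subset, auto)
  have "norm (integral {0..\<sigma>} h) \<le> integral {0..\<sigma>} (\<lambda>x. c)"
    by (rule integral_norm_bound_integral[OF hi]) (use b in auto)
  thus ?thesis using s by (simp add: mult.commute)
qed

lemma exp_int: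
  fixes M A C \<sigma> :: real
  assumes M: "M > 0" and s: "\<sigma> \<ge> 0"
  shows "((\<lambda>x. A + C * exp (M * x)) has_integral (A * \<sigma> + (C * exp (M * \<sigma>) / M - C / M))) {0..\<sigma>}"
proof -
  define F where "F x = A * x + C * exp (M * x) / M" for x
  have "((\<lambda>x. A + C * exp (M * x)) has_integral (F \<sigma> - F 0)) {0..\<sigma>}"
  proof (rule fundamental_theorem_of_calculus[OF s])
    fix x assume "x \<in> {0..\<sigma>}"
    have "(F has_real_derivative A * 1 + C * (exp (M * x) * (M * 1)) / M) (at x)"
      unfolding F_def[abs_def] using M by (intro derivative_eq_intros) auto
    hence "(F has_real_derivative A + C * exp (M * x)) (at x)" using M by simp
    hence "(F has_real_derivative A + C * exp (M * x)) (at x within {0..\<sigma>})" by (rule has_field_derivative_at_within)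
    thus "(F has_vector_derivative A + C * exp (M * x)) (at x within {0..\<sigma>})"
      by (rule has_real_derivative_iff_has_vector_derivative[THEN iffD1])
  qed
  moreover have "F \<sigma> - F 0 = A * \<sigma> + (C * exp (M * \<sigma>) / M - C / M)" by (simp add: F_def)
  ultimately show ?thesis by simp
qed

lemma raw_cont:
  fixes \<psi> :: "real \<Rightarrow> real"
  assumes \<psi>: "continuous_on UNIV \<psi>" "\<psi> 0 = 0" and M: "M \<ge> 0"
  shows "continuous_on UNIV (raw a E lam M \<psi>)"
proof -
  define h where "h x = Kf a E lam x (exp (M * x) * \<psi> x)" for x
  have hc: "continuous_on UNIV h" unfolding h_def by (intro K_cont continuous_intros \<psi>(1))
  define I where "I \<sigma> = integral {0..\<sigma>} h" for \<sigma>
  have rw: "raw a E lam M \<psi> \<sigma> = (if \<sigma> \<le> 0 then 0 else exp (- (M * \<sigma>)) * (I \<sigma> / \<sigma>))" for \<sigma>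
    by (simp add: raw_def I_def h_def[abs_def])
  have "isCont (raw a E lam M \<psi>) \<sigma>" for \<sigma>
  proof -
    consider "\<sigma> > 0" | "\<sigma> < 0" | "\<sigma> = 0" by linarith
    thus ?thesis
    proof cases
      case 1
      have "isCont I \<sigma>" unfolding I_def by (rule DERIV_isCont[OF I_deriv[OF hc 1]])
      hence c: "isCont (\<lambda>\<sigma>. exp (- (M * \<sigma>)) * (I \<sigma> / \<sigma>)) \<sigma>" using 1 by (intro continuous_intros) auto
      have "eventually (\<lambda>x. x \<in> {0<..}) (nhds \<sigma>)" using 1 by (intro eventually_nhds_in_open) auto
      hence "eventually (\<lambda>x. raw a E lam M \<psi> x = exp (- (M * x)) * (I x / x)) (nhds \<sigma>)"
        by eventually_elim (simp add: rw)
      hence "isCont (raw a E lam M \<psi>) \<sigma> = isCont (\<lambda>\<sigma>. exp (- (M * \<sigma>)) * (I \<sigma> / \<sigma>)) \<sigma>" by (rule isCont_cong)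
      thus ?thesis using c by simp
    next
      case 2
      have "eventually (\<lambda>x. x \<in> {..<0}) (nhds \<sigma>)" using 2 by (intro eventually_nhds_in_open) auto
      hence "eventually (\<lambda>x. raw a E lam M \<psi> x = 0) (nhds \<sigma>)"
        by eventually_elim (simp add: rw)
      hence "isCont (raw a E lam M \<psi>) \<sigma> = isCont (\<lambda>x::real. 0::real) \<sigma>" by (rule isCont_cong)
      thus ?thesis by simp
    next
      case 3
      have h0: "h 0 = 0" by (simp add: h_def \<psi>(2) K00)
      have hc0: "isCont h 0" using hc by (simp add: continuous_on_eq_continuous_at)
      have "raw a E lam M \<psi> \<midarrow>0\<rightarrow> 0"
        unfolding LIM_eq
      proof (intro allI impI)
        fix r :: real assume r: "r > 0"
        have "h \<midarrow>0\<rightarrow> 0" using hc0 h0 by (simp add: isCont_def)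
        hence L: "\<forall>r>0. \<exists>s>0. \<forall>x. x \<noteq> 0 \<and> norm (x - 0) < s \<longrightarrow> norm (h x - 0) < r"
          by (simp only: LIM_eq)
        have ex: "\<exists>s>0. \<forall>x. x \<noteq> 0 \<and> norm (x - 0) < s \<longrightarrow> norm (h x - 0) < r/2"
          by (rule mp[OF spec[OF L, of "r/2"] half_gt_zero[OF r]])
        from ex obtain s where s': "s > 0 \<and> (\<forall>x. x \<noteq> 0 \<and> norm (x - 0) < s \<longrightarrow> norm (h x - 0) < r/2)" ..
        have s: "s > 0" "\<forall>x. x \<noteq> 0 \<and> norm (x - 0) < s \<longrightarrow> norm (h x - 0) < r/2"
          using s' by (rule conjunct1, rule conjunct2)
        have hb: "\<bar>h x\<bar> \<le> r/2" if xs: "\<bar>x\<bar> < s" for x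
        proof (cases "x = 0")
          case True thus ?thesis using h0 r by simp
        next
          case False
          hence "norm (h x - 0) < r/2" using s(2)[rule_format, of x] xs by simp
          thus ?thesis by simp
        qed
        show "\<exists>s>0. \<forall>x. x \<noteq> 0 \<and> norm (x - 0) < s \<longrightarrow> norm (raw a E lam M \<psi> x - 0) < r"
        proof (intro exI[of _ s] conjI allI impI)
          fix x :: real assume x: "x \<noteq> 0 \<and> norm (x - 0) < s"
          show "norm (raw a E lam M \<psi> x - 0) < r"
          proof (cases "x \<le> 0")
            case True thus ?thesis using r by (simp add: rw)
          next
            case False
            have "\<bar>I x\<bar> \<le> r/2 * x" unfolding I_def using False x
              by (intro int_bound[OF hc] hb) auto
            hence "\<bar>I x / x\<bar> \<le> r/2" using False by (simp add: abs_divide divide_le_eq mult.commute)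
            moreover have "exp (- (M * x)) \<le> 1" using False M by simp
            ultimately have "\<bar>exp (- (M * x)) * (I x / x)\<bar> \<le> 1 * (r/2)"
              by (simp only: abs_mult abs_exp_cancel) (intro mult_mono, auto)
            hence "\<bar>raw a E lam M \<psi> x\<bar> \<le> r/2" using False by (simp add: rw)
            thus ?thesis using r by simp
          qed
        qed (rule s(1))
      qed
      moreover have "raw a E lam M \<psi> 0 = 0" by (simp add: rw)
      ultimately show ?thesis using 3 by (simp add: isCont_def)
    qed
  qed
  thus ?thesis by (simp add: continuous_on_eq_continuous_at)
qed




lemma exp_cancel: "exp (- (y::real)) * exp y = 1"
  by (simp add: exp_minus)

context
  fixes a lam E :: real
  assumes a0: "0 < a" and a1: "a < 1/2" and E0: "0 \<le> E" and E1: "E \<le> 1"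
begin

lemmas Kb = K_bound[OF a0 a1 E0 E1]
lemmas Ks = K_small[OF a0 a1 E0 E1]
lemmas Klg = K_lip_global[OF a0 a1 E0 E1]
lemmas Kll = K_lip_local[OF a0 a1 E0 E1]

lemma raw_pos:
  "\<sigma> > 0 \<Longrightarrow> raw a E lam M \<psi> \<sigma> = exp (- (M * \<sigma>)) * (integral {0..\<sigma>} (\<lambda>x. Kf a E lam x (exp (M * x) * \<psi> x)) / \<sigma>)"
  by (simp add: raw_def)

lemma raw_nonpos: "\<sigma> \<le> 0 \<Longrightarrow> raw a E lam M \<psi> \<sigma> = 0"
  by (simp add: raw_def)

lemma raw_bnd:
  fixes \<psi> :: "real \<Rightarrow> real"
  assumes \<psi>: "continuous_on UNIV \<psi>" and N: "\<And>x. \<bar>\<psi> x\<bar> \<le> N" and M: "M \<ge> 0"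
  shows "\<bar>raw a E lam M \<psi> \<sigma>\<bar> \<le> (2 + 2 * \<bar>lam\<bar>) + 4 * N"
proof (cases "\<sigma> \<le> 0")
  case True
  have "N \<ge> 0" using N[of 0] by simp
  thus ?thesis using True by (simp add: raw_nonpos)
next
  case False
  hence s: "\<sigma> > 0" by simp
  define B0 where "B0 = 2 + 2 * \<bar>lam\<bar>"
  have B0: "B0 \<ge> 0" by (simp add: B0_def)
  define h where "h = (\<lambda>x. Kf a E lam x (exp (M * x) * \<psi> x))"
  have hc: "continuous_on UNIV h" unfolding h_def by (intro K_cont continuous_intros \<psi>)
  have hb: "\<bar>h x\<bar> \<le> B0 + 4 * exp (M * \<sigma>) * N" if x: "x \<in> {0..\<sigma>}" for x
  proof -
    have "\<bar>h x\<bar> \<le> B0 + 4 * \<bar>exp (M * x) * \<psi> x\<bar>" unfolding h_def B0_def using x by (intro Kb) auto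
    moreover have "\<bar>exp (M * x) * \<psi> x\<bar> \<le> exp (M * \<sigma>) * N"
    proof -
      have "\<bar>exp (M * x) * \<psi> x\<bar> = exp (M * x) * \<bar>\<psi> x\<bar>" by (simp add: abs_mult)
      also have "\<dots> \<le> exp (M * \<sigma>) * N"
        using x M N[of x] by (intro mult_mono) (auto intro: mult_left_mono)
      finally show ?thesis .
    qed
    ultimately show ?thesis by linarith
  qed
  have I: "\<bar>integral {0..\<sigma>} h\<bar> \<le> (B0 + 4 * exp (M * \<sigma>) * N) * \<sigma>"
    by (rule int_bound[OF hc]) (use s hb in auto)
  have q: "\<bar>integral {0..\<sigma>} h\<bar> / \<sigma> \<le> B0 + 4 * exp (M * \<sigma>) * N"
    using I s by (simp add: divide_le_eq)
  have "\<bar>raw a E lam M \<psi> \<sigma>\<bar> = exp (- (M * \<sigma>)) * (\<bar>integral {0..\<sigma>} h\<bar> / \<sigma>)"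
    using s by (simp add: raw_pos h_def abs_mult abs_divide)
  also have "\<dots> \<le> exp (- (M * \<sigma>)) * (B0 + 4 * exp (M * \<sigma>) * N)"
    by (rule mult_left_mono[OF q]) simp
  also have "\<dots> = exp (- (M * \<sigma>)) * B0 + 4 * N * (exp (- (M * \<sigma>)) * exp (M * \<sigma>))"
    by (simp add: algebra_simps)
  also have "\<dots> = exp (- (M * \<sigma>)) * B0 + 4 * N" by (simp only: exp_cancel mult_1_right)
  also have "\<dots> \<le> 1 * B0 + 4 * N"
    using M s B0 by (intro add_right_mono mult_right_mono) auto
  finally show ?thesis by (simp add: B0_def)
qed

lemma raw_small:
  fixes \<psi> :: "real \<Rightarrow> real"
  assumes \<psi>: "continuous_on UNIV \<psi>" and M: "M \<ge> 0"
    and s1: "\<sigma>1 * (2 + 2 * \<bar>lam\<bar>) \<le> 1/16" "4 * \<sigma>1 \<le> 1/8"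
    and sm: "\<And>x. x \<in> {0..\<sigma>1} \<Longrightarrow> \<bar>exp (M * x) * \<psi> x\<bar> \<le> 1/2"
    and s: "0 < \<sigma>" "\<sigma> \<le> \<sigma>1"
  shows "\<bar>exp (M * \<sigma>) * raw a E lam M \<psi> \<sigma>\<bar> \<le> 1/4"
proof -
  define h where "h = (\<lambda>x. Kf a E lam x (exp (M * x) * \<psi> x))"
  have hc: "continuous_on UNIV h" unfolding h_def by (intro K_cont continuous_intros \<psi>)
  have hb: "\<bar>h x\<bar> \<le> 1/4" if x: "x \<in> {0..\<sigma>}" for x
  proof -
    have "x * (2 + 2 * \<bar>lam\<bar>) \<le> \<sigma>1 * (2 + 2 * \<bar>lam\<bar>)" using x s by (intro mult_right_mono) auto
    thus ?thesis unfolding h_def using x s s1 sm[of x] by (intro Ks) auto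
  qed
  have I: "\<bar>integral {0..\<sigma>} h\<bar> \<le> 1/4 * \<sigma>"
    by (rule int_bound[OF hc]) (use s hb in auto)
  have "exp (M * \<sigma>) * raw a E lam M \<psi> \<sigma> = (exp (- (M * \<sigma>)) * exp (M * \<sigma>)) * (integral {0..\<sigma>} h / \<sigma>)"
    using s by (simp add: raw_pos h_def)
  also have "\<dots> = integral {0..\<sigma>} h / \<sigma>" by (simp only: exp_cancel mult_1_left)
  finally show ?thesis using I s by (simp add: abs_divide divide_le_eq)
qed

lemma raw_contr:
  fixes \<psi>1 \<psi>2 :: "real \<Rightarrow> real"
  assumes \<psi>: "continuous_on UNIV \<psi>1" "continuous_on UNIV \<psi>2"
    and s1: "\<sigma>1 > 0" "\<sigma>1 * (2 + 2 * \<bar>lam\<bar>) \<le> 1/16" "4 * \<sigma>1 \<le> 1/8"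
    and M: "M = 16 / \<sigma>1"
    and sm1: "\<And>x. x \<in> {0..\<sigma>1} \<Longrightarrow> \<bar>exp (M * x) * \<psi>1 x\<bar> \<le> 1/2"
    and sm2: "\<And>x. x \<in> {0..\<sigma>1} \<Longrightarrow> \<bar>exp (M * x) * \<psi>2 x\<bar> \<le> 1/2"
    and dl: "\<And>x. \<bar>\<psi>1 x - \<psi>2 x\<bar> \<le> \<delta>"
  shows "\<bar>raw a E lam M \<psi>1 \<sigma> - raw a E lam M \<psi>2 \<sigma>\<bar> \<le> \<delta> / 2"
proof (cases "\<sigma> \<le> 0")
  case True
  have "\<delta> \<ge> 0" using dl[of 0] by simp
  thus ?thesis using True by (simp add: raw_nonpos)
next
  case False
  hence s: "\<sigma> > 0" by simp
  have d0: "\<delta> \<ge> 0" using dl[of 0] by simp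
  have Mp: "M > 0" using M s1 by simp
  define h1 where "h1 = (\<lambda>x. Kf a E lam x (exp (M * x) * \<psi>1 x))"
  define h2 where "h2 = (\<lambda>x. Kf a E lam x (exp (M * x) * \<psi>2 x))"
  have hc1: "continuous_on UNIV h1" unfolding h1_def by (intro K_cont continuous_intros \<psi>)
  have hc2: "continuous_on UNIV h2" unfolding h2_def by (intro K_cont continuous_intros \<psi>)
  have hi1: "h1 integrable_on {0..\<sigma>}" by (intro integrable_continuous_real continuous_on_subset[OF hc1]) simp
  have hi2: "h2 integrable_on {0..\<sigma>}" by (intro integrable_continuous_real continuous_on_subset[OF hc2]) simp
  define A where "A = \<delta> / 4 * exp (M * \<sigma>)"
  define C where "C = 4 * \<delta> * \<sigma> / \<sigma>1"
  have C0: "C \<ge> 0" using d0 s s1 by (simp add: C_def)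
  have pw: "\<bar>h1 x - h2 x\<bar> \<le> A + C * exp (M * x)" if x: "x \<in> {0..\<sigma>}" for x
  proof -
    have dphi: "\<bar>exp (M * x) * \<psi>1 x - exp (M * x) * \<psi>2 x\<bar> \<le> exp (M * x) * \<delta>"
    proof -
      have "\<bar>exp (M * x) * \<psi>1 x - exp (M * x) * \<psi>2 x\<bar> = exp (M * x) * \<bar>\<psi>1 x - \<psi>2 x\<bar>"
        by (simp add: abs_mult right_diff_distrib[symmetric])
      also have "\<dots> \<le> exp (M * x) * \<delta>" using dl[of x] by (intro mult_left_mono) auto
      finally show ?thesis .
    qed
    have A0: "A \<ge> 0" using d0 by (simp add: A_def)
    have Ce: "C * exp (M * x) \<ge> 0" using C0 by simp
    show ?thesis
    proof (cases "x \<le> \<sigma>1")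
      case True
      have "\<bar>h1 x - h2 x\<bar> \<le> 1/4 * \<bar>exp (M * x) * \<psi>1 x - exp (M * x) * \<psi>2 x\<bar>"
        unfolding h1_def h2_def using x True s1 sm1[of x] sm2[of x] by (intro Kll) auto
      also have "\<dots> \<le> 1/4 * (exp (M * x) * \<delta>)" using dphi by simp
      also have "\<dots> \<le> 1/4 * (exp (M * \<sigma>) * \<delta>)" using x Mp d0 by (intro mult_left_mono mult_right_mono) auto
      also have "\<dots> = A" by (simp add: A_def)
      finally show ?thesis using Ce by linarith
    next
      case False
      have "\<bar>h1 x - h2 x\<bar> \<le> 4 * \<bar>exp (M * x) * \<psi>1 x - exp (M * x) * \<psi>2 x\<bar>"
        unfolding h1_def h2_def using x by (intro Klg) auto
      also have "\<dots> \<le> 4 * (exp (M * x) * \<delta>)" using dphi by simp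
      also have "\<dots> \<le> C * exp (M * x)"
      proof -
        have "\<sigma> / \<sigma>1 \<ge> 1" using False x s1 by simp
        hence "4 * \<delta> * 1 \<le> 4 * \<delta> * (\<sigma> / \<sigma>1)" using d0 by (intro mult_left_mono) auto
        hence "4 * \<delta> \<le> C" by (simp add: C_def)
        thus ?thesis by (simp add: mult_right_mono algebra_simps)
      qed
      finally show ?thesis using A0 by linarith
    qed
  qed
  have ei: "((\<lambda>x. A + C * exp (M * x)) has_integral (A * \<sigma> + (C * exp (M * \<sigma>) / M - C / M))) {0..\<sigma>}"
    by (rule exp_int[OF Mp]) (use s in simp)
  have "norm (integral {0..\<sigma>} (\<lambda>x. h1 x - h2 x)) \<le> integral {0..\<sigma>} (\<lambda>x. A + C * exp (M * x))"
    by (rule integral_norm_bound_integral) (use integrable_diff[OF hi1 hi2] ei pw in auto)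
  also have "\<dots> = A * \<sigma> + (C * exp (M * \<sigma>) / M - C / M)" using ei by (rule integral_unique)
  also have "\<dots> \<le> A * \<sigma> + C * exp (M * \<sigma>) / M" using C0 Mp by simp
  also have "\<dots> = \<delta> * \<sigma> * exp (M * \<sigma>) / 2"
  proof -
    have "C * exp (M * \<sigma>) / M = \<delta> * \<sigma> * exp (M * \<sigma>) / 4" using s1 by (simp add: C_def M field_simps)
    thus ?thesis by (simp add: A_def field_simps)
  qed
  finally have I: "\<bar>integral {0..\<sigma>} h1 - integral {0..\<sigma>} h2\<bar> \<le> \<delta> * \<sigma> * exp (M * \<sigma>) / 2"
    using integral_diff[OF hi1 hi2] by simp
  have "raw a E lam M \<psi>1 \<sigma> - raw a E lam M \<psi>2 \<sigma> = exp (- (M * \<sigma>)) * ((integral {0..\<sigma>} h1 - integral {0..\<sigma>} h2) / \<sigma>)"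
    using s by (simp add: raw_pos h1_def h2_def diff_divide_distrib right_diff_distrib)
  hence "\<bar>raw a E lam M \<psi>1 \<sigma> - raw a E lam M \<psi>2 \<sigma>\<bar> = exp (- (M * \<sigma>)) * (\<bar>integral {0..\<sigma>} h1 - integral {0..\<sigma>} h2\<bar> / \<sigma>)"
    using s by (simp add: abs_mult abs_divide)
  also have "\<dots> \<le> exp (- (M * \<sigma>)) * (\<delta> * exp (M * \<sigma>) / 2)"
  proof (rule mult_left_mono)
    show "\<bar>integral {0..\<sigma>} h1 - integral {0..\<sigma>} h2\<bar> / \<sigma> \<le> \<delta> * exp (M * \<sigma>) / 2"
      using I s by (simp add: divide_le_eq algebra_simps)
  qed simp
  also have "\<dots> = (exp (- (M * \<sigma>)) * exp (M * \<sigma>)) * \<delta> / 2" by (simp add: algebra_simps)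
  also have "\<dots> = \<delta> / 2" by (simp only: exp_cancel mult_1_left)
  finally show ?thesis .
qed

end



lemma ev_cont: "continuous_on UNIV (\<lambda>\<psi>::real \<Rightarrow>\<^sub>C real. apply_bcontfun \<psi> x)"
proof (rule lipschitz_on_continuous_on)
  show "1-lipschitz_on UNIV (\<lambda>\<psi>::real \<Rightarrow>\<^sub>C real. apply_bcontfun \<psi> x)"
    by (rule lipschitz_onI) (auto simp: dist_bounded)
qed

lemma fst_deriv: "((\<lambda>t. 2 * arctan (exp t)) has_real_derivative sg (exp t)) (at t)"
proof -
  have "((\<lambda>t. 2 * arctan (exp t)) has_real_derivative 2 * (inverse (1 + (exp t)^2) * exp t)) (at t)"
    by (rule DERIV_cmult[OF DERIV_chain2[OF DERIV_arctan DERIV_exp]])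
  moreover have "2 * (inverse (1 + (exp t)^2) * exp t) = sg (exp t)" by (simp add: sg_def field_simps)
  ultimately show ?thesis by simp
qed

lemma existence:
  fixes a E lam :: real
  assumes a0: "0 < a" and a1: "a < 1/2" and E0: "0 \<le> E" and E1: "E \<le> 1"
  shows "\<exists>\<gamma>. strip_orbit a E lam \<gamma> \<and> alpha_lim \<gamma> (0, 0)"
proof -
  define B0 where "B0 = 2 + 2 * \<bar>lam\<bar>"
  have B0: "B0 \<ge> 2" by (simp add: B0_def)
  define \<sigma>1 where "\<sigma>1 = 1 / (16 * B0)"
  have e1: "\<sigma>1 * B0 = 1/16" using B0 by (simp add: \<sigma>1_def)
  have e2: "4 * \<sigma>1 \<le> 1/8" using B0 by (simp add: \<sigma>1_def field_simps)
  have s1: "\<sigma>1 > 0" "\<sigma>1 * (2 + 2 * \<bar>lam\<bar>) \<le> 1/16" "4 * \<sigma>1 \<le> 1/8"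
    using B0 e1 e2 by (auto simp: \<sigma>1_def B0_def[symmetric])
  define M where "M = 16 / \<sigma>1"
  have Mp: "M > 0" using s1 by (simp add: M_def)
  define S where "S = {\<psi> :: real \<Rightarrow>\<^sub>C real. apply_bcontfun \<psi> 0 = 0 \<and>
      (\<forall>x\<in>{0..\<sigma>1}. \<bar>exp (M * x) * apply_bcontfun \<psi> x\<bar> \<le> 1/2)}"
  define T where "T \<psi> = Bcontfun (raw a E lam M (apply_bcontfun \<psi>))" for \<psi>
  have inb: "raw a E lam M (apply_bcontfun \<psi>) \<in> bcontfun" if "\<psi> \<in> S" for \<psi>
  proof (rule bcontfun_normI)
    show "continuous_on UNIV (raw a E lam M (apply_bcontfun \<psi>))"
      using that Mp by (intro raw_cont) (auto simp: S_def)
    show "norm (raw a E lam M (apply_bcontfun \<psi>) x) \<le> B0 + 4 * norm \<psi>" for x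
      unfolding B0_def real_norm_def
      using raw_bnd[OF a0 a1 E0 E1, where lam=lam and \<psi>="apply_bcontfun \<psi>" and N="norm \<psi>" and M=M and \<sigma>=x] Mp norm_bounded[of \<psi>]
      by auto
  qed
  have Tap: "apply_bcontfun (T \<psi>) = raw a E lam M (apply_bcontfun \<psi>)" if "\<psi> \<in> S" for \<psi>
    unfolding T_def using inb[OF that] by (rule Bcontfun_inverse)
  have smS: "\<And>x. x \<in> {0..\<sigma>1} \<Longrightarrow> \<bar>exp (M * x) * apply_bcontfun \<psi> x\<bar> \<le> 1/2" if "\<psi> \<in> S" for \<psi>
    using that by (auto simp: S_def)
  have TS: "T ` S \<subseteq> S"
  proof
    fix \<phi> assume "\<phi> \<in> T ` S"
    then obtain \<psi> where \<psi>: "\<psi> \<in> S" "\<phi> = T \<psi>" by blast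
    have "apply_bcontfun \<phi> 0 = 0" using \<psi> Tap by (simp add: raw_def)
    moreover have "\<bar>exp (M * x) * apply_bcontfun \<phi> x\<bar> \<le> 1/2" if x: "x \<in> {0..\<sigma>1}" for x
    proof (cases "x = 0")
      case True thus ?thesis using \<psi> Tap by (simp add: raw_def)
    next
      case False
      have "\<bar>exp (M * x) * raw a E lam M (apply_bcontfun \<psi>) x\<bar> \<le> 1/4"
        using x False by (intro raw_small[OF a0 a1 E0 E1 _ _ s1(2,3) smS[OF \<psi>(1)]]) (auto simp: Mp less_imp_le)
      thus ?thesis using \<psi> Tap by simp
    qed
    ultimately show "\<phi> \<in> S" by (simp add: S_def)
  qed
  have contr: "dist (T \<psi>1) (T \<psi>2) \<le> 1/2 * dist \<psi>1 \<psi>2" if "\<psi>1 \<in> S" "\<psi>2 \<in> S" for \<psi>1 \<psi>2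
  proof (rule dist_bound)
    fix x
    have "\<bar>raw a E lam M (apply_bcontfun \<psi>1) x - raw a E lam M (apply_bcontfun \<psi>2) x\<bar> \<le> dist \<psi>1 \<psi>2 / 2"
    proof (rule raw_contr[OF a0 a1 E0 E1 _ _ s1 M_def smS[OF that(1)] smS[OF that(2)]])
      show "\<bar>apply_bcontfun \<psi>1 y - apply_bcontfun \<psi>2 y\<bar> \<le> dist \<psi>1 \<psi>2" for y
        using dist_bounded[of \<psi>1 y \<psi>2] by (simp add: dist_real_def)
    qed auto
    thus "dist (apply_bcontfun (T \<psi>1) x) (apply_bcontfun (T \<psi>2) x) \<le> 1/2 * dist \<psi>1 \<psi>2"
      using that Tap by (simp add: dist_real_def)
  qed
  have clS: "closed S"
  proof -
    have "S = {\<psi>. apply_bcontfun \<psi> 0 = 0} \<inter> (\<Inter>x\<in>{0..\<sigma>1}. {\<psi>. \<bar>exp (M * x) * apply_bcontfun \<psi> x\<bar> \<le> 1/2})"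
      by (auto simp: S_def)
    moreover have "closed {\<psi>::real \<Rightarrow>\<^sub>C real. apply_bcontfun \<psi> 0 = 0}"
      by (rule closed_Collect_eq[OF ev_cont continuous_on_const])
    moreover have "closed {\<psi>::real \<Rightarrow>\<^sub>C real. \<bar>exp (M * x) * apply_bcontfun \<psi> x\<bar> \<le> 1/2}" for x
      by (rule closed_Collect_le) (intro continuous_intros ev_cont)+
    ultimately show ?thesis by (auto intro!: closed_Int closed_INT)
  qed
  have S0: "0 \<in> S" by (simp add: S_def)
  have cS: "complete S" using clS by (simp only: complete_eq_closed)
  have Sne: "S \<noteq> {}" using S0 by blast
  have ex: "\<exists>!x\<in>S. T x = x"
    by (rule Banach_fix[OF cS Sne _ _ TS contr]) simp_all
  then obtain \<psi> where \<psi>': "\<psi> \<in> S \<and> T \<psi> = \<psi>" by (elim ex1E) (rule that)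
  have \<psi>: "\<psi> \<in> S" "T \<psi> = \<psi>" using \<psi>' by simp_all
  define p where "p = apply_bcontfun \<psi>"
  have pfix: "raw a E lam M p = p" using Tap[OF \<psi>(1)] \<psi>(2) by (simp add: p_def)
  have pc: "continuous_on UNIV p" by (simp add: p_def)
  have p0: "p 0 = 0" using \<psi>(1) by (simp add: S_def p_def)
  define \<Phi> where "\<Phi> x = exp (M * x) * p x" for x
  have \<Phi>c: "continuous_on UNIV \<Phi>" unfolding \<Phi>_def by (intro continuous_intros pc)
  define h where "h = (\<lambda>x. Kf a E lam x (\<Phi> x))"
  have hc: "continuous_on UNIV h" unfolding h_def by (intro K_cont \<Phi>c)
  define I where "I \<sigma> = integral {0..\<sigma>} h" for \<sigma>
  have \<Phi>I: "\<Phi> \<sigma> = I \<sigma> / \<sigma>" if s: "\<sigma> > 0" for \<sigma>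
  proof -
    have "p \<sigma> = exp (- (M * \<sigma>)) * (I \<sigma> / \<sigma>)"
      using s raw_pos[OF a0 a1 E0 E1, where lam=lam and \<sigma>=\<sigma> and M=M and \<psi>=p] pfix by (simp add: I_def h_def \<Phi>_def)
    hence "exp (M * \<sigma>) * p \<sigma> = (exp (- (M * \<sigma>)) * exp (M * \<sigma>)) * (I \<sigma> / \<sigma>)" by simp
    thus ?thesis by (simp only: exp_cancel mult_1_left \<Phi>_def)
  qed
  have d\<Phi>: "(\<Phi> has_real_derivative Gf a E lam \<sigma> (\<Phi> \<sigma>) / \<sigma>) (at \<sigma>)" if s: "\<sigma> > 0" for \<sigma>
  proof -
    have dI: "(I has_real_derivative h \<sigma>) (at \<sigma>)" unfolding I_def[abs_def] by (rule I_deriv[OF hc s])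
    have "((\<lambda>x. I x / x) has_real_derivative (h \<sigma> * \<sigma> - I \<sigma> * 1) / (\<sigma> * \<sigma>)) (at \<sigma>)"
      by (rule DERIV_divide[OF dI DERIV_ident]) (use s in simp)
    moreover have "(h \<sigma> * \<sigma> - I \<sigma> * 1) / (\<sigma> * \<sigma>) = Gf a E lam \<sigma> (\<Phi> \<sigma>) / \<sigma>"
    proof -
      have "(h \<sigma> * \<sigma> - I \<sigma> * 1) / (\<sigma> * \<sigma>) = (h \<sigma> - I \<sigma> / \<sigma>) / \<sigma>" using s by (simp add: field_simps)
      also have "\<dots> = (h \<sigma> - \<Phi> \<sigma>) / \<sigma>" using \<Phi>I[OF s] by simp
      also have "\<dots> = Gf a E lam \<sigma> (\<Phi> \<sigma>) / \<sigma>" by (simp add: h_def Kf_def)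
      finally show ?thesis .
    qed
    ultimately have "((\<lambda>x. I x / x) has_real_derivative Gf a E lam \<sigma> (\<Phi> \<sigma>) / \<sigma>) (at \<sigma>)" by simp
    thus ?thesis
      by (rule has_field_derivative_transform_within_open[of _ _ _ "{0<..}"]) (use s \<Phi>I in auto)
  qed
  define Th where "Th t = \<Phi> (exp t)" for t
  have dTh: "(Th has_real_derivative Gf a E lam (exp t) (Th t)) (at t)" for t
  proof -
    have "((\<lambda>t. \<Phi> (exp t)) has_real_derivative Gf a E lam (exp t) (\<Phi> (exp t)) / exp t * exp t) (at t)"
      by (rule DERIV_chain2[OF d\<Phi> DERIV_exp]) simp
    thus ?thesis unfolding Th_def[abs_def] by simp
  qed
  define \<gamma> where "\<gamma> t = (2 * arctan (exp t), Th t)" for t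
  have so: "strip_orbit a E lam \<gamma>"
    unfolding strip_orbit_def
  proof (intro allI conjI)
    fix t
    have "(\<gamma> has_vector_derivative (sg (exp t), Gf a E lam (exp t) (Th t))) (at t)"
      unfolding \<gamma>_def[abs_def]
      by (intro has_vector_derivative_Pair has_real_derivative_iff_has_vector_derivative[THEN iffD1] fst_deriv dTh)
    thus "(\<gamma> has_vector_derivative theta_field a E lam (\<gamma> t)) (at t)"
      by (simp add: \<gamma>_def field_2arctan)
    show "0 < fst (\<gamma> t)" by (simp add: \<gamma>_def)
    show "fst (\<gamma> t) < pi" using arctan_ubound[of "exp t"] by (simp add: \<gamma>_def)
  qed
  have al: "alpha_lim \<gamma> (0, 0)"
    unfolding alpha_lim_def \<gamma>_def[abs_def]
  proof (rule tendsto_Pair)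
    show "((\<lambda>t. 2 * arctan (exp t)) \<longlongrightarrow> 0) at_bot"
      using tendsto_mult[OF tendsto_const[of 2] tendsto_arctan[OF exp_at_bot]] by simp
    have "isCont \<Phi> 0" using \<Phi>c by (simp add: continuous_on_eq_continuous_at)
    hence "((\<lambda>t. \<Phi> (exp t)) \<longlongrightarrow> \<Phi> 0) at_bot" by (rule isCont_tendsto_compose[OF _ exp_at_bot])
    moreover have "\<Phi> 0 = 0" by (simp add: \<Phi>_def p0)
    ultimately show "(Th \<longlongrightarrow> 0) at_bot" unfolding Th_def[abs_def] by simp
  qed
  show ?thesis using so al by blast
qed




lemma shift_lim_bot:
  fixes f :: "real \<Rightarrow> real"
  assumes "(f \<longlongrightarrow> (L::real)) at_bot"
  shows "((\<lambda>t. f (t + s)) \<longlongrightarrow> L) at_bot"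
  using filterlim_compose[OF assms shift_at_bot] .

lemma shift_lim_top:
  fixes f :: "real \<Rightarrow> real"
  assumes "(f \<longlongrightarrow> (L::real)) at_top"
  shows "((\<lambda>t. f (t + s)) \<longlongrightarrow> L) at_top"
  using filterlim_compose[OF assms shift_at_top] .

theorem proposition5:
  fixes a E lam :: real
  assumes "0 < a" "a < 1/2"
    and "0 < E" "E \<le> 1"
    and "lam \<le> -1 + a"
    and "saddles_connector a E lam"
  shows "\<forall>E'. 0 \<le> E' \<and> E' < E \<longrightarrow> corridor_K1 a E' lam 0"
proof (intro allI impI)
  fix E' assume E': "0 \<le> E' \<and> E' < E"
  have a0: "0 < a" and a1: "a < 1/2" and lam: "lam \<le> -1 + a" using assms by auto
  obtain \<gamma>2 where g2: "strip_orbit a E lam \<gamma>2" "alpha_lim \<gamma>2 (0, 0)" "omega_lim \<gamma>2 (pi, - pi)"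
    using assms(6) by (auto simp: saddles_connector_def)
  obtain s2 where s2: "nsol a E lam (\<lambda>t. snd (\<gamma>2 (t + s2)))"
    using orbit_nsol[OF g2(1)] by blast
  have l2: "((\<lambda>t. snd (\<gamma>2 (t + s2))) \<longlongrightarrow> 0) at_bot"
  proof -
    have "((\<lambda>t. snd (\<gamma>2 t)) \<longlongrightarrow> snd (0::real, 0::real)) at_bot"
      using g2(2) unfolding alpha_lim_def by (rule tendsto_snd)
    thus ?thesis using shift_lim_bot[of "\<lambda>t. snd (\<gamma>2 t)" 0 s2] by simp
  qed
  have l2t: "((\<lambda>t. snd (\<gamma>2 (t + s2))) \<longlongrightarrow> - pi) at_top"
  proof -
    have "((\<lambda>t. snd (\<gamma>2 t)) \<longlongrightarrow> snd (pi, - pi)) at_top"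
      using g2(3) unfolding omega_lim_def by (rule tendsto_snd)
    thus ?thesis using shift_lim_top[of "\<lambda>t. snd (\<gamma>2 t)" "- pi" s2] by simp
  qed
  have E'b: "0 \<le> E'" "E' \<le> 1" using E' assms by auto
  have ex: "\<exists>\<gamma>. strip_orbit a E' lam \<gamma> \<and> alpha_lim \<gamma> (0, 0)"
    by (rule existence[OF a0 a1 E'b])
  have all: "\<not> omega_lim \<gamma> (pi, - pi) \<and> omega_lim \<gamma> (pi, - 2 * pi * of_int 0)"
    if g: "strip_orbit a E' lam \<gamma> \<and> alpha_lim \<gamma> (0, 0)" for \<gamma>
  proof -
    obtain s1 where s1: "\<And>t. fst (\<gamma> (t + s1)) = 2 * arctan (exp t)" "nsol a E' lam (\<lambda>t. snd (\<gamma> (t + s1)))"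
      using orbit_nsol[of a E' lam \<gamma>] g by blast
    have l1: "((\<lambda>t. snd (\<gamma> (t + s1))) \<longlongrightarrow> 0) at_bot"
    proof -
      have "((\<lambda>t. snd (\<gamma> t)) \<longlongrightarrow> snd (0::real, 0::real)) at_bot"
        using g unfolding alpha_lim_def by (intro tendsto_snd) simp
      thus ?thesis using shift_lim_bot[of "\<lambda>t. snd (\<gamma> t)" 0 s1] by simp
    qed
    have l1t: "((\<lambda>t. snd (\<gamma> (t + s1))) \<longlongrightarrow> 0) at_top"
      by (rule cmp[OF a0 a1 lam _ _ _ s1(2) s2 l1 l2 l2t]) (use E' assms in auto)
    have geq: "\<gamma> t = (2 * arctan (exp (t - s1)), snd (\<gamma> ((t - s1) + s1)))" for t
      using s1(1)[of "t - s1"] by (metis add_diff_cancel_left' diff_add_cancel prod.collapse)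
    have lim: "(\<gamma> \<longlongrightarrow> (pi, 0)) at_top"
    proof -
      have fe: "filterlim (\<lambda>t. exp (t + - s1)) at_top at_top"
        by (rule filterlim_compose[OF exp_at_top shift_at_top])
      have f1: "((\<lambda>t. 2 * arctan (exp (t - s1))) \<longlongrightarrow> 2 * (pi/2)) at_top"
        using tendsto_mult[OF tendsto_const[of 2] filterlim_compose[OF tendsto_arctan_at_top fe]] by simp
      have f2: "((\<lambda>t. snd (\<gamma> ((t - s1) + s1))) \<longlongrightarrow> 0) at_top"
        using shift_lim_top[OF l1t, of "- s1"] by simp
      have "((\<lambda>t. (2 * arctan (exp (t - s1)), snd (\<gamma> ((t - s1) + s1)))) \<longlongrightarrow> (pi, 0)) at_top"
        using tendsto_Pair[OF f1 f2] by simp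
      moreover have "\<gamma> = (\<lambda>t. (2 * arctan (exp (t - s1)), snd (\<gamma> ((t - s1) + s1))))"
        using geq by (rule ext)
      ultimately show ?thesis by simp
    qed
    have "\<not> omega_lim \<gamma> (pi, - pi)"
    proof
      assume "omega_lim \<gamma> (pi, - pi)"
      hence "(\<gamma> \<longlongrightarrow> (pi, - pi)) at_top" by (simp add: omega_lim_def)
      hence "(pi, 0::real) = (pi, - pi)" using tendsto_unique[OF _ lim] by simp
      thus False by simp
    qed
    moreover have "omega_lim \<gamma> (pi, - 2 * pi * of_int 0)" using lim by (simp add: omega_lim_def)
    ultimately show ?thesis by blast
  qed
  show "corridor_K1 a E' lam 0"
    unfolding corridor_K1_def using ex all by blast
qed



end
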